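(* Let $(X,\mathbf R)$ be a symmetric association scheme with $D$ classes, cometric with respect to $E_0,\dots,E_D$. Fix $x\in X$, let $T=T(x)$ and $t\in\{1,\dots,D\}$. For $\chi\in V$ the following are equivalent: (i) $\chi$ is orthogonal to every irreducible $T$-module $W\subseteq V$ with $1\le r^*(W)\le t$; (ii) $F\chi$ is a relative $t$-design with respect to $x$ for every $F\in T$. Moreover, if every irreducible $T$-module in $V$ with dual endpoint at most $t$ is dual thin, then the weaker condition "$E_k^*(x)\chi$ is a relative $t$-design with respect to $x$ for every $0\le k\le D$" already implies (i) (and hence (ii)).
   Context: $(X,\mathbf R)$ is a symmetric association scheme with associate matrices $A_0=I,\dots,A_D$, Bose–Mesner algebra $M$, primitive idempotents $E_0=|X|^{-1}J,\dots,E_D$; cometric with respect to $E_0,\dots,E_D$ means each $E_j$ is a polynomial of degree exactly $j$ in $E_1$ under entrywise multiplication. $V=\mathbb C^X$ with standard basis $\{\hat y\}$ and standard Hermitian inner product. $E_i^*(x)$ is diagonal with $(E_i^*(x))_{yy}=(A_i)_{xy}$; $A_i^*(x)$ is diagonal with $(A_i^*(x))_{yy}=|X|(E_i)_{xy}$; $T(x)$ is the algebra generated by $M$ and the $A_i^*(x)$. For an irreducible $T(x)$-module $W$: dual endpoint $r^*(W)=\min\{j:E_jW\ne0\}$; dual thin means $\dim E_jW\le 1$ for all $j$. $\psi$ is a relative $t$-design with respect to $x$ if $E_j\psi$ and $E_j\hat x$ are linearly dependent for all $1\le j\le t$. *)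

theory Defs
  imports "HOL-Analysis.Analysis" "HOL-Computational_Algebra.Polynomial"
begin

text \<open>The vertex set X is a finite type 'x; V = complex^'x; matrices are complex^'x^'x.\<close>

definition cscaleM :: "complex \<Rightarrow> complex^'x^'y \<Rightarrow> complex^'x^'y" where
  "cscaleM c B = (\<chi> i j. c * B$i$j)"

definition allones :: "complex^'x^'x" where
  "allones = (\<chi> i j. 1)"

definition bose_mesner :: "(nat \<Rightarrow> complex^'x^'x) \<Rightarrow> nat \<Rightarrow> (complex^'x^'x) set" where
  "bose_mesner A D = {B. \<exists>c. B = (\<Sum>k\<le>D. cscaleM (c k) (A k))}"

definition symmetric_scheme ::
  "(nat \<Rightarrow> complex^'x::finite^'x) \<Rightarrow> (nat \<Rightarrow> complex^'x^'x) \<Rightarrow> nat \<Rightarrow> bool" where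
  "symmetric_scheme A E D \<longleftrightarrow>
     (\<forall>i\<le>D. \<forall>a b. A i $ a $ b = 0 \<or> A i $ a $ b = 1) \<and>
     (\<forall>i\<le>D. A i \<noteq> 0) \<and>
     A 0 = mat 1 \<and>
     (\<Sum>i\<le>D. A i) = allones \<and>
     (\<forall>i\<le>D. transpose (A i) = A i) \<and>
     (\<forall>i\<le>D. \<forall>j\<le>D. A i ** A j \<in> bose_mesner A D) \<and>
     (\<forall>i\<le>D. E i \<in> bose_mesner A D) \<and>
     (\<forall>i\<le>D. E i \<noteq> 0) \<and>
     (\<forall>i\<le>D. \<forall>j\<le>D. E i ** E j = (if i = j then E i else 0)) \<and>
     (\<Sum>i\<le>D. E i) = mat 1 \<and>
     E 0 = cscaleM (1 / of_nat CARD('x)) allones"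

text \<open>Cometric: each E j is a polynomial of degree exactly j in E 1 under entrywise
  (Hadamard) multiplication (the Hadamard 0-th power being J).\<close>
definition cometric :: "(nat \<Rightarrow> complex^'x^'x) \<Rightarrow> nat \<Rightarrow> bool" where
  "cometric E D \<longleftrightarrow>
     (\<forall>j\<le>D. \<exists>p :: complex poly. degree p = j \<and> E j = (\<chi> a b. poly p (E 1 $ a $ b)))"

definition dual_idem :: "(nat \<Rightarrow> complex^'x^'x) \<Rightarrow> 'x \<Rightarrow> nat \<Rightarrow> complex^'x^'x" where
  "dual_idem A x i = (\<chi> y z. if y = z then A i $ x $ y else 0)"

definition dual_adj :: "(nat \<Rightarrow> complex^'x::finite^'x) \<Rightarrow> 'x \<Rightarrow> nat \<Rightarrow> complex^'x^'x" where
  "dual_adj E x i = (\<chi> y z. if y = z then of_nat CARD('x) * E i $ x $ y else 0)"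

inductive_set terwilliger ::
  "(nat \<Rightarrow> complex^'x::finite^'x) \<Rightarrow> (nat \<Rightarrow> complex^'x^'x) \<Rightarrow> nat \<Rightarrow> 'x \<Rightarrow> (complex^'x^'x) set"
  for A E D x where
  gen_A: "i \<le> D \<Longrightarrow> A i \<in> terwilliger A E D x"
| gen_Astar: "i \<le> D \<Longrightarrow> dual_adj E x i \<in> terwilliger A E D x"
| one: "mat 1 \<in> terwilliger A E D x"
| add: "F \<in> terwilliger A E D x \<Longrightarrow> G \<in> terwilliger A E D x \<Longrightarrow> F + G \<in> terwilliger A E D x"
| scale: "F \<in> terwilliger A E D x \<Longrightarrow> cscaleM c F \<in> terwilliger A E D x"
| mult: "F \<in> terwilliger A E D x \<Longrightarrow> G \<in> terwilliger A E D x \<Longrightarrow> F ** G \<in> terwilliger A E D x"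

definition csubspace :: "(complex^'x) set \<Rightarrow> bool" where
  "csubspace W \<longleftrightarrow> 0 \<in> W \<and> (\<forall>u\<in>W. \<forall>v\<in>W. u + v \<in> W) \<and> (\<forall>c. \<forall>u\<in>W. c *s u \<in> W)"

definition T_module ::
  "(nat \<Rightarrow> complex^'x::finite^'x) \<Rightarrow> (nat \<Rightarrow> complex^'x^'x) \<Rightarrow> nat \<Rightarrow> 'x \<Rightarrow> (complex^'x) set \<Rightarrow> bool" where
  "T_module A E D x W \<longleftrightarrow> csubspace W \<and> (\<forall>F\<in>terwilliger A E D x. \<forall>w\<in>W. F *v w \<in> W)"

definition irred_T_module ::
  "(nat \<Rightarrow> complex^'x::finite^'x) \<Rightarrow> (nat \<Rightarrow> complex^'x^'x) \<Rightarrow> nat \<Rightarrow> 'x \<Rightarrow> (complex^'x) set \<Rightarrow> bool" where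
  "irred_T_module A E D x W \<longleftrightarrow> T_module A E D x W \<and> W \<noteq> {0} \<and>
     (\<forall>W'. T_module A E D x W' \<and> W' \<subseteq> W \<longrightarrow> W' = {0} \<or> W' = W)"

definition dual_endpoint :: "(nat \<Rightarrow> complex^'x::finite^'x) \<Rightarrow> (complex^'x) set \<Rightarrow> nat" where
  "dual_endpoint E W = (LEAST j. \<exists>w\<in>W. E j *v w \<noteq> 0)"

text \<open>Dual thin: dim (E_j W) \<le> 1 for all j (E_j W contained in a line).\<close>
definition dual_thin :: "(nat \<Rightarrow> complex^'x::finite^'x) \<Rightarrow> nat \<Rightarrow> (complex^'x) set \<Rightarrow> bool" where
  "dual_thin E D W \<longleftrightarrow> (\<forall>j\<le>D. \<exists>v. \<forall>w\<in>W. \<exists>c. E j *v w = c *s v)"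

definition herm :: "complex^'x::finite \<Rightarrow> complex^'x \<Rightarrow> complex" where
  "herm u v = (\<Sum>y\<in>UNIV. u $ y * cnj (v $ y))"

definition lin_dep2 :: "complex^'x \<Rightarrow> complex^'x \<Rightarrow> bool" where
  "lin_dep2 u v \<longleftrightarrow> (\<exists>a b. (a \<noteq> 0 \<or> b \<noteq> 0) \<and> a *s u + b *s v = 0)"

definition relative_design ::
  "(nat \<Rightarrow> complex^'x::finite^'x) \<Rightarrow> nat \<Rightarrow> 'x \<Rightarrow> complex^'x \<Rightarrow> bool" where
  "relative_design E t x \<psi> \<longleftrightarrow> (\<forall>j\<in>{1..t}. lin_dep2 (E j *v \<psi>) (E j *v axis x 1))"

end

theory Submission
  imports Defs
begin

definition hadj :: "complex^'n^'m \<Rightarrow> complex^'m^'n" where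
  "hadj M = (\<chi> i j. cnj (M$j$i))"

lemma hadj_nth[simp]: "hadj M $ i $ j = cnj (M$j$i)"
  by (simp add: hadj_def)

lemma herm_mult: "herm (M *v u) v = herm u (hadj M *v v)"
proof -
  have "herm (M *v u) v = (\<Sum>y\<in>UNIV. \<Sum>z\<in>UNIV. M$y$z * u$z * cnj (v$y))"
    unfolding herm_def matrix_vector_mult_def by (simp add: sum_distrib_right)
  also have "\<dots> = (\<Sum>z\<in>UNIV. \<Sum>y\<in>UNIV. M$y$z * u$z * cnj (v$y))"
    by (rule sum.swap)
  also have "\<dots> = herm u (hadj M *v v)"
    unfolding herm_def matrix_vector_mult_def hadj_def
    by (simp add: sum_distrib_left mult_ac)
  finally show ?thesis .
qed

lemma herm_add_left: "herm (u + v) w = herm u w + herm v w"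
  by (simp add: herm_def distrib_right sum.distrib)
lemma herm_add_right: "herm w (u + v) = herm w u + herm w v"
  by (simp add: herm_def distrib_left sum.distrib)
lemma herm_diff_left: "herm (u - v) w = herm u w - herm v w"
  by (simp add: herm_def left_diff_distrib sum_subtractf)
lemma herm_diff_right: "herm w (u - v) = herm w u - herm w v"
  by (simp add: herm_def right_diff_distrib sum_subtractf)
lemma herm_scale_left: "herm (c *s u) w = c * herm u w"
  by (simp add: herm_def sum_distrib_left mult_ac)
lemma herm_scale_right: "herm w (c *s u) = cnj c * herm w u"
  by (simp add: herm_def sum_distrib_left mult_ac)
lemma herm_zero_left[simp]: "herm 0 w = 0"
  by (simp add: herm_def)
lemma herm_zero_right[simp]: "herm w 0 = 0"
  by (simp add: herm_def)
lemma herm_sum_left: "finite S \<Longrightarrow> herm (\<Sum>i\<in>S. f i) w = (\<Sum>i\<in>S. herm (f i) w)"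
  by (induction S rule: finite_induct) (auto simp: herm_add_left)
lemma herm_sum_right: "finite S \<Longrightarrow> herm w (\<Sum>i\<in>S. f i) = (\<Sum>i\<in>S. herm w (f i))"
  by (induction S rule: finite_induct) (auto simp: herm_add_right)
lemma herm_commute: "herm v u = cnj (herm u v)"
  by (simp add: herm_def mult.commute)

lemma herm_self: "herm u u = complex_of_real (\<Sum>y\<in>UNIV. (cmod (u$y))^2)"
proof -
  have "herm u u = (\<Sum>y\<in>UNIV. complex_of_real ((cmod (u$y))^2))"
    by (simp only: herm_def complex_norm_square)
  then show ?thesis by (simp only: of_real_sum)
qed

lemma herm_self_eq_0: "herm u u = 0 \<longleftrightarrow> u = 0"
proof
  assume "herm u u = 0"
  then have "(\<Sum>y\<in>UNIV. (cmod (u$y))^2) = 0" by (simp only: herm_self of_real_eq_0_iff)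
  then have "\<forall>y\<in>UNIV. (cmod (u$y))^2 = 0"
    by (subst sum_nonneg_eq_0_iff[symmetric]) auto
  then show "u = 0" by (simp add: vec_eq_iff)
qed simp

lemma hadj_mult: "hadj (M ** N) = hadj N ** hadj M"
  by (simp add: vec_eq_iff matrix_matrix_mult_def mult.commute)
lemma hadj_hadj[simp]: "hadj (hadj M) = M"
  by (simp add: vec_eq_iff)
lemma hadj_add: "hadj (M + N) = hadj M + hadj N"
  by (simp add: vec_eq_iff)
lemma hadj_diff: "hadj (M - N) = hadj M - hadj N"
  by (simp add: vec_eq_iff)
lemma hadj_cscale: "hadj (cscaleM c M) = cscaleM (cnj c) (hadj M)"
  by (simp add: vec_eq_iff cscaleM_def)
lemma hadj_mat1[simp]: "hadj (mat 1 :: complex^'n^'n) = mat 1"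
  by (simp add: vec_eq_iff mat_def)
lemma hadj_zero[simp]: "hadj 0 = 0"
  by (simp add: vec_eq_iff)
lemma hadj_sum: "finite S \<Longrightarrow> hadj (\<Sum>i\<in>S. f i) = (\<Sum>i\<in>S. hadj (f i))"
  by (induction S rule: finite_induct) (auto simp: hadj_add)

lemma cscaleM_nth[simp]: "cscaleM c M $ i $ j = c * M $ i $ j"
  by (simp add: cscaleM_def)
lemma cscaleM_mulv: "cscaleM c M *v u = c *s (M *v u)"
  by (simp add: vec_eq_iff matrix_vector_mult_def sum_distrib_left mult_ac)
lemma cscaleM_mult_left: "cscaleM c M ** N = cscaleM c (M ** N)"
  by (simp add: vec_eq_iff matrix_matrix_mult_def sum_distrib_left mult_ac)
lemma cscaleM_mult_right: "M ** cscaleM c N = cscaleM c (M ** N)"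
  by (simp add: vec_eq_iff matrix_matrix_mult_def sum_distrib_left mult_ac)
lemma cscaleM_add: "cscaleM c (M + N) = cscaleM c M + cscaleM c N"
  by (simp add: vec_eq_iff distrib_left)
lemma cscaleM_add2: "cscaleM (c + d) M = cscaleM c M + cscaleM d M"
  by (simp add: vec_eq_iff distrib_right)
lemma cscaleM_cscaleM: "cscaleM c (cscaleM d M) = cscaleM (c*d) M"
  by (simp add: vec_eq_iff)
lemma cscaleM_one[simp]: "cscaleM 1 M = M"
  by (simp add: vec_eq_iff)
lemma cscaleM_zero[simp]: "cscaleM 0 M = 0"
  by (simp add: vec_eq_iff)
lemma cscaleM_zero2[simp]: "cscaleM c 0 = 0"
  by (simp add: vec_eq_iff)

lemma sum_mulv: "finite S \<Longrightarrow> (\<Sum>i\<in>S. f i) *v u = (\<Sum>i\<in>S. f i *v u)"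
  by (induction S rule: finite_induct) (auto simp: matrix_vector_mult_add_rdistrib)
lemma sum_mat_nth: "(\<Sum>i\<in>S. f i) $ a $ b = (\<Sum>i\<in>S. f i $ a $ b)"
  by (simp add: sum_component)
lemma mulv_sum: "finite S \<Longrightarrow> M *v (\<Sum>i\<in>S. f i) = (\<Sum>i\<in>S. M *v f i)"
  by (induction S rule: finite_induct) (auto simp: matrix_vector_right_distrib)
lemma mulv_scale: "(M::complex^'n^'m) *v (c *s u) = c *s (M *v u)"
  by (auto simp: vec_eq_iff matrix_vector_mult_def sum_distrib_left algebra_simps intro!: sum.cong)
lemma matrix_add_rdistrib: "((B + C) ** A) = (B ** A) + (C ** A)"
  by (vector matrix_matrix_mult_def sum.distrib[symmetric] field_simps)
lemma mult_sum_left: "finite S \<Longrightarrow> (\<Sum>i\<in>S. f i) ** M = (\<Sum>i\<in>S. f i ** M)"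
  by (induction S rule: finite_induct) (auto simp: matrix_add_rdistrib)
lemma mult_sum_right: "finite S \<Longrightarrow> M ** (\<Sum>i\<in>S. f i) = (\<Sum>i\<in>S. M ** f i)"
  by (induction S rule: finite_induct) (auto simp: matrix_add_ldistrib)

lemma csubspace_real: 
  fixes W :: "(complex^'n) set"
  assumes "csubspace W" shows "subspace W"
proof -
  have "r *\<^sub>R u = complex_of_real r *s u" for r and u :: "complex^'n"
    by (simp add: vec_eq_iff) (simp add: scaleR_conv_of_real)
  then show ?thesis using assms unfolding csubspace_def subspace_def by metis
qed

lemma inner_herm: "(z::complex^'n) \<bullet> w = Re (herm z w)"
  unfolding inner_vec_def herm_def inner_complex_def by (simp add: Re_sum)

lemma orth_decomp:
  fixes W :: "(complex^'n) set"
  assumes "csubspace W"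
  shows "\<exists>y\<in>W. \<forall>w\<in>W. herm (v - y) w = 0"
proof -
  have sW: "subspace W" using csubspace_real[OF assms] .
  obtain y z where y: "y \<in> span W" and z: "\<And>w. w \<in> span W \<Longrightarrow> orthogonal z w" and v: "v = y + z"
    using orthogonal_subspace_decomp_exists by metis
  have yW: "y \<in> W" using y sW by (metis span_eq_iff)
  have "herm (v - y) w = 0" if w: "w \<in> W" for w
  proof -
    have zw: "z = v - y" using v by simp
    have iw: "\<i> *s w \<in> W" using w assms unfolding csubspace_def by blast
    have "Re (herm z w) = 0" using z[OF span_base[OF w]]
      by (simp add: orthogonal_def inner_herm)
    moreover have "Re (herm z (\<i> *s w)) = 0" using z[OF span_base[OF iw]]
      by (simp add: orthogonal_def inner_herm)
    then have "Im (herm z w) = 0" by (simp add: herm_scale_right)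
    ultimately show ?thesis using zw by (simp add: complex_eq_iff)
  qed
  then show ?thesis using yW by blast
qed

lemma matrix_diff_ldistrib: "(A::'a::ring_1^'n^'m) ** (B - C) = A ** B - A ** C"
  by (vector matrix_matrix_mult_def sum_subtractf[symmetric] field_simps)
lemma matrix_diff_rdistrib: "((B::'a::ring_1^'n^'m) - C) ** A = B ** A - C ** A"
  by (vector matrix_matrix_mult_def sum_subtractf[symmetric] field_simps)

lemma mat_mult_nth: "(M ** N) $ a $ b = (\<Sum>c\<in>UNIV. M$a$c * N$c$b)"
  by (simp add: matrix_matrix_mult_def)
lemma mulv_nth: "(M *v u) $ a = (\<Sum>c\<in>UNIV. M$a$c * u$c)"
  by (simp add: matrix_vector_mult_def)

lemma mult_hadj_zero:
  fixes R :: "complex^'n^'m"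
  assumes "R ** hadj R = 0" shows "R = 0"
proof -
  have "R $ a = 0" for a
  proof -
    have "herm (R$a) (R$a) = (R ** hadj R) $ a $ a"
      by (simp add: herm_def mat_mult_nth)
    then show ?thesis using assms by (simp add: herm_self_eq_0)
  qed
  then show ?thesis by (simp add: vec_eq_iff)
qed

locale scheme =
  fixes A E :: "nat \<Rightarrow> complex^'x::finite^'x" and D :: nat
  assumes sch: "symmetric_scheme A E D"
begin

abbreviation "BM \<equiv> bose_mesner A D"

lemmas S = sch[unfolded symmetric_scheme_def]

lemma A01: "i \<le> D \<Longrightarrow> A i $ a $ b = 0 \<or> A i $ a $ b = 1"
  using S[THEN conjunct1] by blast
lemma A_nz: "i \<le> D \<Longrightarrow> A i \<noteq> 0"
  using S[THEN conjunct2, THEN conjunct1] by blast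
lemma A0: "A 0 = mat 1"
  using S[THEN conjunct2, THEN conjunct2, THEN conjunct1] by blast
lemma sumA: "(\<Sum>i\<le>D. A i) = allones"
  using S[THEN conjunct2, THEN conjunct2, THEN conjunct2, THEN conjunct1] by blast
lemma A_transpose: "i \<le> D \<Longrightarrow> transpose (A i) = A i"
  using S[THEN conjunct2, THEN conjunct2, THEN conjunct2, THEN conjunct2, THEN conjunct1] by blast
lemma AA_BM: "i \<le> D \<Longrightarrow> j \<le> D \<Longrightarrow> A i ** A j \<in> BM"
  using S[THEN conjunct2, THEN conjunct2, THEN conjunct2, THEN conjunct2, THEN conjunct2, THEN conjunct1] by blast
lemma E_BM: "i \<le> D \<Longrightarrow> E i \<in> BM"
  using S[THEN conjunct2, THEN conjunct2, THEN conjunct2, THEN conjunct2, THEN conjunct2, THEN conjunct2, THEN conjunct1] by blast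
lemma E_nz: "i \<le> D \<Longrightarrow> E i \<noteq> 0"
  using S[THEN conjunct2, THEN conjunct2, THEN conjunct2, THEN conjunct2, THEN conjunct2, THEN conjunct2, THEN conjunct2, THEN conjunct1] by blast
lemma EE: "i \<le> D \<Longrightarrow> j \<le> D \<Longrightarrow> E i ** E j = (if i = j then E i else 0)"
  using S[THEN conjunct2, THEN conjunct2, THEN conjunct2, THEN conjunct2, THEN conjunct2, THEN conjunct2, THEN conjunct2, THEN conjunct2, THEN conjunct1] by blast
lemma sumE: "(\<Sum>i\<le>D. E i) = mat 1"
  using S[THEN conjunct2, THEN conjunct2, THEN conjunct2, THEN conjunct2, THEN conjunct2, THEN conjunct2, THEN conjunct2, THEN conjunct2, THEN conjunct2, THEN conjunct1] by blast
lemma E0: "E 0 = cscaleM (1 / of_nat CARD('x)) allones"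
  using S[THEN conjunct2, THEN conjunct2, THEN conjunct2, THEN conjunct2, THEN conjunct2, THEN conjunct2, THEN conjunct2, THEN conjunct2, THEN conjunct2, THEN conjunct2] by blast

lemma A_sym: "i \<le> D \<Longrightarrow> A i $ a $ b = A i $ b $ a"
proof -
  assume i: "i \<le> D"
  have "transpose (A i) $ a $ b = A i $ b $ a" by (simp add: transpose_def)
  then show ?thesis using A_transpose[OF i] by simp
qed

lemma sumA_nth: "(\<Sum>i\<le>D. A i $ a $ b) = 1"
  using arg_cong[OF sumA, of "\<lambda>M. M $ a $ b"] by (simp add: sum_mat_nth allones_def)

lemma card_A: "card {i \<in> {..D}. A i $ a $ b = 1} = 1"
proof -
  have "(\<Sum>i\<le>D. A i $ a $ b) = (\<Sum>i\<le>D. of_nat (if A i $ a $ b = 1 then 1 else 0))"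
  proof (rule sum.cong[OF refl])
    fix i assume "i \<in> {..D}"
    then show "A i $ a $ b = of_nat (if A i $ a $ b = 1 then 1 else 0)"
      using A01[of i a b] by auto
  qed
  also have "\<dots> = of_nat (\<Sum>i\<le>D. (if A i $ a $ b = 1 then 1 else 0))"
    by (simp only: of_nat_sum)
  also have "(\<Sum>i\<le>D. (if A i $ a $ b = 1 then 1 else 0::nat)) = (\<Sum>i\<in>{i \<in> {..D}. A i $ a $ b = 1}. 1)"
    by (simp only: sum.inter_filter[symmetric] finite_atMost)
  also have "\<dots> = card {i \<in> {..D}. A i $ a $ b = 1}" by simp
  finally have "of_nat (card {i \<in> {..D}. A i $ a $ b = 1}) = (1::complex)"
    using sumA_nth[of a b] by simp
  then show ?thesis by (simp only: of_nat_eq_1_iff)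
qed

lemma A_ex: "\<exists>k\<le>D. A k $ a $ b = 1 \<and> (\<forall>j\<le>D. j \<noteq> k \<longrightarrow> A j $ a $ b = 0)"
proof -
  obtain k where k: "{i \<in> {..D}. A i $ a $ b = 1} = {k}"
    using card_A[of a b] card_1_singletonE by blast
  then have "k \<le> D" "A k $ a $ b = 1" by auto
  moreover have "A j $ a $ b = 0" if "j \<le> D" "j \<noteq> k" for j
  proof -
    have "A j $ a $ b \<noteq> 1" using k that by blast
    then show ?thesis using A01[OF that(1)] by blast
  qed
  ultimately show ?thesis by blast
qed

lemma A_unique: "i \<le> D \<Longrightarrow> j \<le> D \<Longrightarrow> A i $ a $ b = 1 \<Longrightarrow> A j $ a $ b = 1 \<Longrightarrow> i = j"
proof -
  assume h: "i \<le> D" "j \<le> D" "A i $ a $ b = 1" "A j $ a $ b = 1"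
  obtain k where k: "k \<le> D" "A k $ a $ b = 1" "\<forall>j\<le>D. j \<noteq> k \<longrightarrow> A j $ a $ b = 0"
    using A_ex by blast
  have "i = k" using h k by (metis zero_neq_one)
  moreover have "j = k" using h k by (metis zero_neq_one)
  ultimately show "i = j" by simp
qed

lemma A_diag: "1 \<le> k \<Longrightarrow> k \<le> D \<Longrightarrow> A k $ a $ a = 0"
proof -
  assume k: "1 \<le> k" "k \<le> D"
  have a0: "A 0 $ a $ a = 1" using A0 by (simp add: mat_def)
  have "A k $ a $ a \<noteq> 1"
  proof
    assume "A k $ a $ a = 1"
    then have "0 = k" using A_unique[of 0 k a a] a0 k by simp
    then show False using k by simp
  qed
  then show ?thesis using A01[OF k(2)] by blast
qed

lemma hadj_A: 
  assumes i: "i \<le> D" shows "hadj (A i) = A i"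
proof -
  have "cnj (A i $ b $ a) = A i $ a $ b" for a b using A01[OF i, of a b] A_sym[OF i, of a b] by auto
  then show ?thesis by (simp add: vec_eq_iff)
qed

lemma BM_iff: "B \<in> BM \<longleftrightarrow> (\<exists>c. B = (\<Sum>k\<le>D. cscaleM (c k) (A k)))"
  by (simp add: bose_mesner_def)

lemma BM_entry:
  assumes B: "B = (\<Sum>k\<le>D. cscaleM (c k) (A k))" and k0: "k0 \<le> D" "A k0 $ a $ b = 1"
  shows "B $ a $ b = c k0"
proof -
  have z: "A k $ a $ b = 0" if "k \<in> {..D} - {k0}" for k
  proof -
    obtain k1 where k1: "k1 \<le> D" "A k1 $ a $ b = 1" "\<forall>j\<le>D. j \<noteq> k1 \<longrightarrow> A j $ a $ b = 0"
      using A_ex by blast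
    have "k1 = k0" using A_unique[OF k1(1) k0(1) k1(2) k0(2)] .
    then show ?thesis using k1(3) that by auto
  qed
  have "B $ a $ b = (\<Sum>k\<le>D. c k * A k $ a $ b)" using B by (simp add: sum_mat_nth)
  also have "\<dots> = c k0 * A k0 $ a $ b + (\<Sum>k\<in>{..D} - {k0}. c k * A k $ a $ b)"
    using k0 by (simp add: sum.remove)
  also have "(\<Sum>k\<in>{..D} - {k0}. c k * A k $ a $ b) = 0"
    using z by (intro sum.neutral) simp
  finally show ?thesis using k0 by simp
qed

lemma BM_add: "B \<in> BM \<Longrightarrow> C \<in> BM \<Longrightarrow> B + C \<in> BM"
proof -
  assume "B \<in> BM" "C \<in> BM"
  then obtain c d where "B = (\<Sum>k\<le>D. cscaleM (c k) (A k))" "C = (\<Sum>k\<le>D. cscaleM (d k) (A k))"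
    by (auto simp: BM_iff)
  then have "B + C = (\<Sum>k\<le>D. cscaleM (c k + d k) (A k))"
    by (simp add: sum.distrib cscaleM_add2)
  then show ?thesis by (auto simp: BM_iff)
qed

lemma BM_scale: "B \<in> BM \<Longrightarrow> cscaleM a B \<in> BM"
proof -
  assume "B \<in> BM"
  then obtain c where "B = (\<Sum>k\<le>D. cscaleM (c k) (A k))" by (auto simp: BM_iff)
  then have "cscaleM a B = (\<Sum>k\<le>D. cscaleM (a * c k) (A k))"
    by (simp add: vec_eq_iff sum_mat_nth sum_distrib_left mult.assoc)
  then show ?thesis by (auto simp: BM_iff)
qed

lemma BM_zero: "0 \<in> BM"
proof -
  show ?thesis unfolding BM_iff by (rule exI[where x="\<lambda>k. 0"]) simp
qed

lemma BM_sum: "finite S \<Longrightarrow> (\<And>i. i \<in> S \<Longrightarrow> f i \<in> BM) \<Longrightarrow> (\<Sum>i\<in>S. f i) \<in> BM"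
  by (induction S rule: finite_induct) (auto simp: BM_zero BM_add)

lemma A_BM: "i \<le> D \<Longrightarrow> A i \<in> BM"
proof -
  assume i: "i \<le> D"
  have eq: "A i = (\<Sum>k\<le>D. cscaleM (if k = i then 1 else 0) (A k))"
    using i by (simp add: if_distrib[of "\<lambda>c. cscaleM c _"] sum.delta cong: if_cong)
  show ?thesis unfolding BM_iff by (rule exI[where x="\<lambda>k. if k = i then 1 else 0"]) (simp only: eq)
qed

lemma mat1_BM: "mat 1 \<in> BM"
  using A_BM[of 0] A0 by simp

lemma BM_mult: "B \<in> BM \<Longrightarrow> C \<in> BM \<Longrightarrow> B ** C \<in> BM"
proof -
  assume "B \<in> BM" "C \<in> BM"
  then obtain c d where B: "B = (\<Sum>k\<le>D. cscaleM (c k) (A k))" and C: "C = (\<Sum>k\<le>D. cscaleM (d k) (A k))"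
    by (auto simp: BM_iff)
  have "B ** C = (\<Sum>l\<le>D. cscaleM (d l) (\<Sum>k\<le>D. cscaleM (c k) (A k ** A l)))"
    unfolding B C by (simp add: mult_sum_left mult_sum_right cscaleM_mult_left cscaleM_mult_right)
  also have "\<dots> \<in> BM"
    by (intro BM_sum BM_scale AA_BM) auto
  finally show ?thesis .
qed

lemma BM_sym: "B \<in> BM \<Longrightarrow> B $ a $ b = B $ b $ a"
  by (auto simp: BM_iff sum_mat_nth intro!: sum.cong simp: A_sym)

lemma BM_transpose: "B \<in> BM \<Longrightarrow> transpose B = B"
  using BM_sym by (simp add: vec_eq_iff transpose_def)

lemma BM_comm: "B \<in> BM \<Longrightarrow> C \<in> BM \<Longrightarrow> B ** C = C ** B"
proof -
  assume b: "B \<in> BM" and c: "C \<in> BM"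
  have "B ** C = transpose (B ** C)" using BM_mult[OF b c] BM_transpose by simp
  also have "\<dots> = transpose C ** transpose B" by (rule matrix_transpose_mul)
  finally show ?thesis using b c BM_transpose by simp
qed

lemma BM_hadj: "B \<in> BM \<Longrightarrow> hadj B \<in> BM"
proof -
  assume "B \<in> BM"
  then obtain c where B: "B = (\<Sum>k\<le>D. cscaleM (c k) (A k))" by (auto simp: BM_iff)
  have eq: "hadj B = (\<Sum>k\<le>D. cscaleM (cnj (c k)) (A k))"
    unfolding B by (simp add: hadj_sum hadj_cscale hadj_A)
  show ?thesis unfolding BM_iff by (rule exI[where x="\<lambda>k. cnj (c k)"]) (simp add: eq)
qed

lemma BM_diag: "B \<in> BM \<Longrightarrow> B $ a $ a = B $ b $ b"
proof -
  assume "B \<in> BM"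
  then obtain c where B: "B = (\<Sum>k\<le>D. cscaleM (c k) (A k))" by (auto simp: BM_iff)
  have "A 0 $ a $ a = 1" "A 0 $ b $ b = 1" using A0 by (auto simp: mat_def)
  then show ?thesis using BM_entry[OF B, of 0] by simp
qed

lemma E_idem: "i \<le> D \<Longrightarrow> E i ** E i = E i"
  using EE by simp

lemma E_herm: 
  assumes i: "i \<le> D" shows "hadj (E i) = E i"
proof -
  define P where "P = E i"
  define Q where "Q = hadj P"
  have P: "P \<in> BM" "P ** P = P" using E_BM E_idem i P_def by auto
  have Q: "Q \<in> BM" using BM_hadj P Q_def by auto
  have comm: "P ** Q = Q ** P" using BM_comm P Q by auto
  define R where "R = Q - Q ** P"
  have hR: "hadj R = P - Q ** P"
    by (simp add: R_def Q_def hadj_diff hadj_mult comm[unfolded Q_def])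
  have "R ** hadj R = (Q - Q ** P) ** (P - Q ** P)" using hR R_def by simp
  also have "\<dots> = Q ** (P - Q ** P) - (Q ** P) ** (P - Q ** P)" by (rule matrix_diff_rdistrib)
  also have "\<dots> = Q ** P - Q ** (Q ** P) - ((Q ** P) ** P - (Q ** P) ** (Q ** P))"
    by (simp only: matrix_diff_ldistrib)
  also have "(Q ** P) ** P = Q ** P" using P by (simp add: matrix_mul_assoc[symmetric])
  also have "(Q ** P) ** (Q ** P) = Q ** (Q ** P)"
    by (metis P(2) comm matrix_mul_assoc)
  finally have "R ** hadj R = 0" by simp
  then have "R = 0" by (rule mult_hadj_zero)
  then have "Q = Q ** P" by (simp add: R_def)
  then have "P = hadj (Q ** P)" by (metis Q_def hadj_hadj)
  also have "\<dots> = Q ** P" by (simp add: hadj_mult Q_def)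
  also have "\<dots> = Q" using \<open>Q = Q ** P\<close> by simp
  finally show ?thesis using P_def Q_def by simp
qed

lemma E_real: "i \<le> D \<Longrightarrow> cnj (E i $ a $ b) = E i $ a $ b"
  using E_herm[of i] BM_sym[OF E_BM, of i a b] by (metis hadj_nth)

lemma E_sym: "i \<le> D \<Longrightarrow> E i $ a $ b = E i $ b $ a"
  using BM_sym[OF E_BM] by blast

lemma E_col_nz:
  assumes i: "i \<le> D" shows "E i *v axis x 1 \<noteq> 0"
proof
  assume h: "E i *v axis x 1 = 0"
  have col: "E i $ y $ x = 0" for y
  proof -
    have "(E i *v axis x 1) $ y = E i $ y $ x"
      by (simp add: mulv_nth axis_def if_distrib cong: if_cong)
    then show ?thesis using h by simp
  qed
  have rowsum: "herm (E i $ a) (E i $ a) = E i $ a $ a" for a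
  proof -
    have "E i $ a $ a = (E i ** E i) $ a $ a" using E_idem[OF i] by simp
    also have "\<dots> = (E i ** hadj (E i)) $ a $ a" using E_herm[OF i] by simp
    finally show ?thesis by (simp add: herm_def mat_mult_nth)
  qed
  have "E i $ x $ x = 0" using col by simp
  then have "E i $ a $ a = 0" for a using BM_diag[OF E_BM[OF i]] by metis
  then have "E i $ a = 0" for a using rowsum herm_self_eq_0 by metis
  then have "E i = 0" by (simp add: vec_eq_iff)
  then show False using E_nz i by simp
qed

end

lemma csub_zero: "csubspace W \<Longrightarrow> 0 \<in> W"
  by (simp add: csubspace_def)
lemma csub_add: "csubspace W \<Longrightarrow> u \<in> W \<Longrightarrow> v \<in> W \<Longrightarrow> u + v \<in> W"
  by (simp add: csubspace_def)
lemma csub_scale: "csubspace W \<Longrightarrow> u \<in> W \<Longrightarrow> c *s u \<in> W"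
  by (simp add: csubspace_def)
lemma csub_neg: "csubspace W \<Longrightarrow> u \<in> W \<Longrightarrow> - u \<in> W"
  using csub_scale[of W u "-1"] by simp
lemma csub_diff: "csubspace W \<Longrightarrow> u \<in> W \<Longrightarrow> v \<in> W \<Longrightarrow> u - v \<in> W"
  using csub_add[of W u "- v"] csub_neg[of W v] by simp
lemma csub_sum: 
  assumes "csubspace W" "finite S" "\<And>i. i \<in> S \<Longrightarrow> f i \<in> W" shows "(\<Sum>i\<in>S. f i) \<in> W"
  using assms(2,3) by (induction S rule: finite_induct) (auto simp: csub_zero csub_add assms(1))

lemma sum_delta_mult: fixes x :: "'n::finite" shows "(\<Sum>y\<in>UNIV. (if y = x then (1::complex) else 0) * f y) = f x"
proof -
  have "(\<Sum>y\<in>UNIV. (if y = x then (1::complex) else 0) * f y) = (\<Sum>y\<in>UNIV. (if y = x then f y else 0))"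
    by (rule sum.cong) auto
  then show ?thesis by (simp add: sum.delta)
qed

lemma sum_delta_mult2: fixes x :: "'n::finite" shows "(\<Sum>y\<in>UNIV. f y * (if y = x then (1::complex) else 0)) = f x"
proof -
  have "(\<Sum>y\<in>UNIV. f y * (if y = x then (1::complex) else 0)) = (\<Sum>y\<in>UNIV. (if y = x then f y else 0))"
    by (rule sum.cong) auto
  then show ?thesis by (simp add: sum.delta)
qed

lemma axis_scale: "(c::complex) *s axis x 1 = axis x c"
  by (simp add: vec_eq_iff axis_def)

lemma herm_axis: "herm (axis x 1) w = cnj (w $ x)"
  unfolding herm_def axis_def by (simp only: vec_lambda_beta sum_delta_mult)

lemma mulv_axis: "(M *v axis x 1) $ y = (M $ y $ x :: complex)"
  unfolding mulv_nth axis_def by (simp only: vec_lambda_beta sum_delta_mult2)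

lemma lin_dep2_iff: "lin_dep2 u v \<longleftrightarrow> (\<exists>a b. (a \<noteq> 0 \<or> b \<noteq> 0) \<and> a *s u + b *s v = 0)"
  by (simp add: lin_dep2_def)

context scheme begin

abbreviation "TT x \<equiv> terwilliger A E D x"

lemma dual_adj_nth: "dual_adj E x i $ a $ b = (if a = b then of_nat CARD('x) * E i $ x $ a else 0)"
  by (simp add: dual_adj_def)

lemma hadj_dual_adj: "i \<le> D \<Longrightarrow> hadj (dual_adj E x i) = dual_adj E x i"
  by (auto simp: vec_eq_iff dual_adj_nth E_real)

lemma hadj_dual_idem: 
  assumes k: "k \<le> D" shows "hadj (dual_idem A x k) = dual_idem A x k"
proof -
  have "cnj (A k $ a $ b) = A k $ a $ b" for a b using A01[OF k, of a b] by auto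
  then show ?thesis by (auto simp: vec_eq_iff dual_idem_def)
qed

lemma T_zero: "0 \<in> TT x"
  using terwilliger.scale[where c=0, OF terwilliger.one] by simp

lemma T_sum: "finite S \<Longrightarrow> (\<And>i. i \<in> S \<Longrightarrow> f i \<in> TT x) \<Longrightarrow> (\<Sum>i\<in>S. f i) \<in> TT x"
  by (induction S rule: finite_induct) (auto simp: T_zero terwilliger.add)

lemma T_hadj: "F \<in> TT x \<Longrightarrow> hadj F \<in> TT x"
proof (induction rule: terwilliger.induct)
  case (gen_A i) then show ?case by (simp add: hadj_A terwilliger.gen_A)
next
  case (gen_Astar i) then show ?case by (simp add: hadj_dual_adj terwilliger.gen_Astar)
next
  case one then show ?case by (simp add: terwilliger.one)
next
  case (add F G) then show ?case by (simp add: hadj_add terwilliger.add)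
next
  case (scale F c) then show ?case by (simp add: hadj_cscale terwilliger.scale)
next
  case (mult F G) then show ?case by (simp add: hadj_mult terwilliger.mult)
qed

lemma BM_T: "B \<in> BM \<Longrightarrow> B \<in> TT x"
  by (auto simp: BM_iff intro!: T_sum terwilliger.scale terwilliger.gen_A)

lemma E_T: "i \<le> D \<Longrightarrow> E i \<in> TT x"
  by (simp add: BM_T E_BM)

definition G0 :: "'x \<Rightarrow> complex^'x^'x" where
  "G0 x = cscaleM (1 / of_nat CARD('x)) (\<Sum>i\<le>D. dual_adj E x i)"

lemma G0_T: "G0 x \<in> TT x"
  unfolding G0_def by (intro terwilliger.scale T_sum terwilliger.gen_Astar) auto

lemma sumE_nth: "(\<Sum>i\<le>D. E i $ a $ b) = (if a = b then 1 else 0)"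
  using arg_cong[OF sumE, of "\<lambda>M. M $ a $ b"] by (simp add: sum_mat_nth mat_def)

lemma G0_nth: "G0 x $ a $ b = (if a = b \<and> a = x then 1 else 0)"
proof -
  have "G0 x $ a $ b = 1 / of_nat CARD('x) * (\<Sum>i\<le>D. dual_adj E x i $ a $ b)"
    by (simp add: G0_def sum_mat_nth)
  also have "\<dots> = (if a = b then (\<Sum>i\<le>D. E i $ x $ a) else 0)"
    by (simp add: dual_adj_nth sum_distrib_left[symmetric])
  finally show ?thesis by (simp add: sumE_nth)
qed

lemma G0_mulv: "G0 x *v u = u $ x *s axis x 1"
proof -
  have "(G0 x *v u) $ a = (u $ x *s axis x 1) $ a" for a
  proof (cases "a = x")
    case True
    have "(G0 x *v u) $ a = (\<Sum>c\<in>UNIV. (if c = x then 1 else 0) * u $ c)"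
      unfolding mulv_nth G0_nth using True by (intro sum.cong) auto
    then show ?thesis using True by (simp only: sum_delta_mult) (simp add: axis_def)
  next
    case False
    then show ?thesis by (simp add: mulv_nth G0_nth axis_def)
  qed
  then show ?thesis by (simp add: vec_eq_iff)
qed

lemma T_module_mulv: "T_module A E D x W \<Longrightarrow> F \<in> TT x \<Longrightarrow> w \<in> W \<Longrightarrow> F *v w \<in> W"
  by (simp add: T_module_def)

lemma T_module_csub: "T_module A E D x W \<Longrightarrow> csubspace W"
  by (simp add: T_module_def)

lemma gen_closed:
  assumes Y: "csubspace Y"
    and cA: "\<And>i y. i \<le> D \<Longrightarrow> y \<in> Y \<Longrightarrow> A i *v y \<in> Y"
    and cS: "\<And>i y. i \<le> D \<Longrightarrow> y \<in> Y \<Longrightarrow> dual_adj E x i *v y \<in> Y"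
  shows "T_module A E D x Y"
proof -
  have "\<forall>y\<in>Y. F *v y \<in> Y" if "F \<in> TT x" for F
    using that
  proof (induction rule: terwilliger.induct)
    case (add F G) then show ?case using Y by (simp add: matrix_vector_mult_add_rdistrib csub_add)
  next
    case (scale F c) then show ?case using Y by (simp add: cscaleM_mulv csub_scale)
  next
    case (mult F G) then show ?case by (simp add: matrix_vector_mul_assoc[symmetric])
  qed (auto simp: cA cS)
  then show ?thesis using Y by (simp add: T_module_def)
qed

lemma E_idem_v: "i \<le> D \<Longrightarrow> E i *v (E i *v w) = E i *v w"
  by (simp add: matrix_vector_mul_assoc E_idem)

lemma herm_E: "i \<le> D \<Longrightarrow> herm (E i *v u) v = herm u (E i *v v)"
  by (simp add: herm_mult E_herm)

lemma mulv_axis_vec: "(E i *v axis x 1) = (\<chi> y. E i $ y $ x)"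
  by (simp add: vec_eq_iff mulv_axis)

lemma xhat_perp:
  assumes W: "T_module A E D x W" and r: "1 \<le> dual_endpoint E W" and w: "w \<in> W"
  shows "w $ x = 0"
proof (rule ccontr)
  assume wx: "w $ x \<noteq> 0"
  have "G0 x *v w \<in> W" using T_module_mulv[OF W G0_T w] .
  then have "w $ x *s axis x 1 \<in> W" by (simp add: G0_mulv)
  then have "(1 / w $ x) *s (w $ x *s axis x 1) \<in> W" using csub_scale[OF T_module_csub[OF W]] by blast
  then have xw: "axis x 1 \<in> W" using wx by (simp add: vector_smult_assoc)
  have "E 0 *v axis x 1 \<noteq> 0" using E_col_nz by simp
  then have "\<exists>w\<in>W. E 0 *v w \<noteq> 0" using xw by blast
  then have "dual_endpoint E W = 0" unfolding dual_endpoint_def by (rule Least_eq_0)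
  then show False using r by simp
qed

lemma herm_xhat_perp:
  assumes W: "T_module A E D x W" and r: "1 \<le> dual_endpoint E W" and w: "w \<in> W"
  shows "herm (axis x 1) w = 0"
  using xhat_perp[OF assms] by (simp add: herm_axis)

lemma endpoint_ex:
  assumes W: "csubspace W" "W \<noteq> {0}"
  shows "\<exists>j\<le>D. \<exists>w\<in>W. E j *v w \<noteq> 0"
proof -
  obtain w where w: "w \<in> W" "w \<noteq> 0" using W csub_zero by blast
  have "w = (\<Sum>i\<le>D. E i) *v w" by (simp add: sumE)
  also have "\<dots> = (\<Sum>i\<le>D. E i *v w)" by (simp add: sum_mulv)
  finally have eq: "w = (\<Sum>i\<le>D. E i *v w)" .
  show ?thesis
  proof (rule ccontr)
    assume "\<not> ?thesis"
    then have "\<forall>i\<in>{..D}. E i *v w = 0" using w by auto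
    then have "(\<Sum>i\<le>D. E i *v w) = 0" by (rule sum.neutral)
    then show False using eq w by simp
  qed
qed

lemma endpoint_props:
  assumes W: "csubspace W" "W \<noteq> {0}"
  shows "dual_endpoint E W \<le> D" "\<exists>w\<in>W. E (dual_endpoint E W) *v w \<noteq> 0"
    "\<And>j w. j < dual_endpoint E W \<Longrightarrow> w \<in> W \<Longrightarrow> E j *v w = 0"
proof -
  obtain j where j: "j \<le> D" "\<exists>w\<in>W. E j *v w \<noteq> 0" using endpoint_ex[OF W] by blast
  have "(LEAST j. \<exists>w\<in>W. E j *v w \<noteq> 0) \<le> j" by (rule Least_le) (rule j(2))
  then show "dual_endpoint E W \<le> D" unfolding dual_endpoint_def using j(1) by simp
  show "\<exists>w\<in>W. E (dual_endpoint E W) *v w \<noteq> 0" unfolding dual_endpoint_def by (rule LeastI_ex) (use j in blast)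
  show "\<And>j w. j < dual_endpoint E W \<Longrightarrow> w \<in> W \<Longrightarrow> E j *v w = 0"
    unfolding dual_endpoint_def using not_less_Least by blast
qed

lemma irred_nz: "irred_T_module A E D x W \<Longrightarrow> W \<noteq> {0}"
  by (simp add: irred_T_module_def)
lemma irred_mod: "irred_T_module A E D x W \<Longrightarrow> T_module A E D x W"
  by (simp add: irred_T_module_def)
lemma irred_sub: "irred_T_module A E D x W \<Longrightarrow> T_module A E D x W' \<Longrightarrow> W' \<subseteq> W \<Longrightarrow> W' = {0} \<or> W' = W"
  by (simp add: irred_T_module_def)

end

context scheme begin

lemma part_ii_i:
  assumes t: "t \<le> D"
    and ii: "\<forall>F\<in>TT x. relative_design E t x (F *v \<chi>')"
    and W: "irred_T_module A E D x W" and r1: "1 \<le> dual_endpoint E W" and rt: "dual_endpoint E W \<le> t"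
  shows "\<forall>w\<in>W. herm \<chi>' w = 0"
proof (rule ccontr)
  assume "\<not> ?thesis"
  then obtain w1 where w1: "w1 \<in> W" "herm \<chi>' w1 \<noteq> 0" by blast
  define r where "r = dual_endpoint E W"
  have WM: "T_module A E D x W" using irred_mod[OF W] .
  have Wc: "csubspace W" using T_module_csub[OF WM] .
  have Wnz: "W \<noteq> {0}" using irred_nz[OF W] .
  have rD: "r \<le> D" using endpoint_props(1)[OF Wc Wnz] r_def by simp
  define W' where "W' = {y \<in> W. \<exists>F\<in>TT x. \<forall>w\<in>W. herm (F *v \<chi>' - y) w = 0}"
  have W'c: "csubspace W'"
    unfolding csubspace_def
  proof (intro conjI ballI allI)
    show "0 \<in> W'" unfolding W'_def using T_zero csub_zero[OF Wc] by force
  next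
    fix u v assume u: "u \<in> W'" and v: "v \<in> W'"
    then obtain F G where F: "F \<in> TT x" "\<forall>w\<in>W. herm (F *v \<chi>' - u) w = 0"
      and G: "G \<in> TT x" "\<forall>w\<in>W. herm (G *v \<chi>' - v) w = 0" and uW: "u \<in> W" and vW: "v \<in> W"
      unfolding W'_def by blast
    have "\<forall>w\<in>W. herm ((F + G) *v \<chi>' - (u + v)) w = 0"
    proof
      fix w assume "w \<in> W"
      have "(F + G) *v \<chi>' - (u + v) = (F *v \<chi>' - u) + (G *v \<chi>' - v)"
        by (simp add: matrix_vector_mult_add_rdistrib)
      then have "herm ((F + G) *v \<chi>' - (u + v)) w = herm (F *v \<chi>' - u) w + herm (G *v \<chi>' - v) w"
        by (simp only: herm_add_left)
      then show "herm ((F + G) *v \<chi>' - (u + v)) w = 0"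
        using F G \<open>w \<in> W\<close> by simp
    qed
    then show "u + v \<in> W'" unfolding W'_def using F G uW vW csub_add[OF Wc] terwilliger.add by blast
  next
    fix c u assume u: "u \<in> W'"
    then obtain F where F: "F \<in> TT x" "\<forall>w\<in>W. herm (F *v \<chi>' - u) w = 0" and uW: "u \<in> W"
      unfolding W'_def by blast
    have "\<forall>w\<in>W. herm (cscaleM c F *v \<chi>' - c *s u) w = 0"
    proof
      fix w assume "w \<in> W"
      have "cscaleM c F *v \<chi>' - c *s u = c *s (F *v \<chi>' - u)"
        by (simp add: cscaleM_mulv vector_ssub_ldistrib)
      then have "herm (cscaleM c F *v \<chi>' - c *s u) w = c * herm (F *v \<chi>' - u) w"
        by (simp only: herm_scale_left)
      then show "herm (cscaleM c F *v \<chi>' - c *s u) w = 0"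
        using F \<open>w \<in> W\<close> by simp
    qed
    then show "c *s u \<in> W'" unfolding W'_def using F uW csub_scale[OF Wc] terwilliger.scale by blast
  qed
  have W'M: "T_module A E D x W'"
    unfolding T_module_def
  proof (intro conjI ballI W'c)
    fix G y assume G: "G \<in> TT x" and y: "y \<in> W'"
    then obtain F where F: "F \<in> TT x" "\<forall>w\<in>W. herm (F *v \<chi>' - y) w = 0" and yW: "y \<in> W"
      unfolding W'_def by blast
    have GyW: "G *v y \<in> W" using T_module_mulv[OF WM G yW] .
    have "\<forall>w\<in>W. herm ((G ** F) *v \<chi>' - G *v y) w = 0"
    proof
      fix w assume w: "w \<in> W"
      have "(G ** F) *v \<chi>' - G *v y = G *v (F *v \<chi>' - y)"
        by (simp add: matrix_vector_mul_assoc[symmetric] matrix_vector_right_distrib[symmetric] matrix_vector_mult_diff_distrib)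
      then have "herm ((G ** F) *v \<chi>' - G *v y) w = herm (F *v \<chi>' - y) (hadj G *v w)"
        by (simp add: herm_mult)
      also have "\<dots> = 0" using F(2) T_module_mulv[OF WM T_hadj[OF G] w] by blast
      finally show "herm ((G ** F) *v \<chi>' - G *v y) w = 0" .
    qed
    then show "G *v y \<in> W'" unfolding W'_def using GyW terwilliger.mult[OF G F(1)] by blast
  qed
  have W'W: "W' \<subseteq> W" unfolding W'_def by blast
  obtain y0 where y0: "y0 \<in> W" "\<forall>w\<in>W. herm (\<chi>' - y0) w = 0" using orth_decomp[OF Wc] by blast
  have "y0 \<in> W'" unfolding W'_def using y0 terwilliger.one[of A E D x] by force
  moreover have "y0 \<noteq> 0"
  proof
    assume "y0 = 0"
    then have "herm \<chi>' w1 = 0" using y0(2) w1(1) by simp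
    then show False using w1(2) by simp
  qed
  ultimately have "W' \<noteq> {0}" by blast
  then have W'eq: "W' = W" using irred_sub[OF W W'M W'W] by blast
  obtain w0 where w0: "w0 \<in> W" "E r *v w0 \<noteq> 0" using endpoint_props(2)[OF Wc Wnz] r_def by blast
  obtain F where F: "F \<in> TT x" "\<forall>w\<in>W. herm (F *v \<chi>' - w0) w = 0"
    using w0(1) W'eq unfolding W'_def by blast
  have "r \<in> {1..t}" using r1 rt r_def by simp
  then have "lin_dep2 (E r *v (F *v \<chi>')) (E r *v axis x 1)"
    using ii F(1) unfolding relative_design_def by blast
  then obtain a b where ab: "a \<noteq> 0 \<or> b \<noteq> 0" "a *s (E r *v (F *v \<chi>')) + b *s (E r *v axis x 1) = 0"
    unfolding lin_dep2_def by blast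
  define v0 where "v0 = E r *v w0"
  have v0W: "v0 \<in> W" unfolding v0_def using T_module_mulv[OF WM E_T[OF rD] w0(1)] .
  have Ev0: "E r *v v0 = v0" unfolding v0_def using E_idem_v[OF rD] .
  have h1: "herm (E r *v (F *v \<chi>')) v0 = herm v0 v0"
  proof -
    have "herm (E r *v (F *v \<chi>')) v0 = herm (F *v \<chi>') v0" using herm_E[OF rD] Ev0 by simp
    also have "\<dots> = herm (F *v \<chi>' - w0) v0 + herm w0 v0"
      by (simp add: herm_diff_left)
    also have "\<dots> = herm w0 v0" using F(2) v0W by simp
    also have "\<dots> = herm w0 (E r *v v0)" using Ev0 by simp
    also have "\<dots> = herm v0 v0" unfolding v0_def using herm_E[OF rD] by simp
    finally show ?thesis .
  qed
  have h2: "herm (E r *v axis x 1) v0 = 0"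
  proof -
    have "herm (E r *v axis x 1) v0 = herm (axis x 1) v0" using herm_E[OF rD] Ev0 by simp
    also have "\<dots> = 0" using herm_xhat_perp[OF WM r1 v0W] .
    finally show ?thesis .
  qed
  have "herm (a *s (E r *v (F *v \<chi>')) + b *s (E r *v axis x 1)) v0 = a * herm v0 v0"
    by (simp add: herm_add_left herm_scale_left h1 h2)
  then have "a * herm v0 v0 = 0" using ab(2) by simp
  moreover have "herm v0 v0 \<noteq> 0" using w0(2) v0_def by (simp add: herm_self_eq_0)
  ultimately have "a = 0" by simp
  then have "b \<noteq> 0" "b *s (E r *v axis x 1) = 0" using ab by auto
  then have "E r *v axis x 1 = 0" by (simp add: vec_eq_iff)
  then show False using E_col_nz[OF rD] by simp
qed

end

definition fl :: "complex^'n^'m \<Rightarrow> complex^('m \<times> 'n)" where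
  "fl M = (\<chi> p. M $ fst p $ snd p)"

lemma fl_add: "fl (M + N) = fl M + fl N"
  by (simp add: fl_def vec_eq_iff)
lemma fl_scale: "fl (cscaleM c M) = c *s fl M"
  by (simp add: fl_def vec_eq_iff)
lemma fl_zero: "fl 0 = 0"
  by (simp add: fl_def vec_eq_iff)
lemma fl_sum: "finite S \<Longrightarrow> fl (\<Sum>i\<in>S. f i) = (\<Sum>i\<in>S. fl (f i))"
  by (induction S rule: finite_induct) (auto simp: fl_add fl_zero)
lemma fl_inj: "fl M = fl N \<Longrightarrow> M = N"
proof -
  assume h: "fl M = fl N"
  have "M $ a $ b = N $ a $ b" for a b
    using arg_cong[OF h, of "\<lambda>v. v $ (a, b)"] by (simp add: fl_def)
  then show "M = N" by (simp add: vec_eq_iff)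
qed

context scheme begin

lemma E_inj: "inj_on E {..D}"
proof (rule inj_onI)
  fix i j assume i: "i \<in> {..D}" and j: "j \<in> {..D}" and eq: "E i = E j"
  show "i = j"
  proof (rule ccontr)
    assume "i \<noteq> j"
    then have "E i ** E j = 0" using EE i j by simp
    then have "E j = 0" using eq E_idem[of j] j by simp
    then show False using E_nz j by simp
  qed
qed

lemma flE_inj: "inj_on (\<lambda>i. fl (E i)) {..D}"
  using E_inj fl_inj by (auto simp: inj_on_def)

lemma BM_span_E:
  assumes B: "B \<in> BM" shows "\<exists>c. B = (\<Sum>i\<le>D. cscaleM (c i) (E i))"
proof -
  define SA where "SA = (\<lambda>k. fl (A k)) ` {..D}"
  define SE where "SE = (\<lambda>k. fl (E k)) ` {..D}"
  have finSA: "finite SA" and finSE: "finite SE" unfolding SA_def SE_def by auto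
  have BMspan: "fl C \<in> vec.span SA" if CB: "C \<in> BM" for C
  proof -
    obtain c where C: "C = (\<Sum>k\<le>D. cscaleM (c k) (A k))" using CB by (auto simp: BM_iff)
    have "fl C = (\<Sum>k\<le>D. c k *s fl (A k))" unfolding C by (simp add: fl_sum fl_scale)
    also have "\<dots> \<in> vec.span SA"
      by (intro vec.span_sum vec.span_scale vec.span_base) (auto simp: SA_def)
    finally show ?thesis .
  qed
  have SEsub: "SE \<subseteq> vec.span SA" unfolding SE_def using BMspan E_BM by auto
  have cardSE: "card SE = Suc D" unfolding SE_def using card_image[OF flE_inj] by simp
  have cardSA: "card SA \<le> Suc D" unfolding SA_def using card_image_le[of "{..D}"] by (metis card_atMost finite_atMost)
  have indep: "vec.independent SE"
  proof
    assume "vec.dependent SE"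
    then obtain u where u: "\<exists>v\<in>SE. u v \<noteq> 0" "(\<Sum>v\<in>SE. u v *s v) = 0"
      using vec.dependent_finite[OF finSE] by blast
    define c where "c i = u (fl (E i))" for i
    have "(\<Sum>v\<in>SE. u v *s v) = (\<Sum>i\<le>D. c i *s fl (E i))"
      unfolding SE_def c_def by (simp add: sum.reindex[OF flE_inj])
    also have "\<dots> = fl (\<Sum>i\<le>D. cscaleM (c i) (E i))" by (simp add: fl_sum fl_scale)
    finally have "fl (\<Sum>i\<le>D. cscaleM (c i) (E i)) = fl 0" using u(2) fl_zero by simp
    then have s0: "(\<Sum>i\<le>D. cscaleM (c i) (E i)) = 0" by (rule fl_inj)
    have "c j = 0" if j: "j \<le> D" for j
    proof -
      have "E j ** (\<Sum>i\<le>D. cscaleM (c i) (E i)) = (\<Sum>i\<le>D. cscaleM (c i) (E j ** E i))"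
        by (simp add: mult_sum_right cscaleM_mult_right)
      also have "\<dots> = (\<Sum>i\<le>D. if i = j then cscaleM (c j) (E j) else 0)"
        by (rule sum.cong) (use j EE in auto)
      also have "\<dots> = cscaleM (c j) (E j)" using j by (simp add: sum.delta)
      finally have "cscaleM (c j) (E j) = 0" using s0 by simp
      moreover obtain a b where "E j $ a $ b \<noteq> 0" using E_nz[OF j] by (metis vec_eq_iff zero_index)
      ultimately show ?thesis by (metis cscaleM_nth mult_eq_0_iff zero_index)
    qed
    then show False using u(1) unfolding SE_def c_def by auto
  qed
  have dimSE: "vec.dim SE = Suc D"
    using vec.dim_span_eq_card_independent[OF indep] cardSE by simp
  have "vec.dim (vec.span SA) \<le> Suc D"
    using vec.dim_le_card[of SA SA] finSA cardSA vec.span_superset by fastforce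
  then have "vec.span SE = vec.span (vec.span SA)"
    using vec.dim_eq_span[OF SEsub] dimSE by simp
  then have spanEq: "vec.span SE = vec.span SA" by (simp add: vec.span_span)
  have "fl B \<in> vec.span SE" using BMspan[OF B] spanEq by simp
  then obtain u where u: "fl B = (\<Sum>v\<in>SE. u v *s v)"
    using vec.span_finite[OF finSE] by blast
  define c where "c i = u (fl (E i))" for i
  have "fl B = (\<Sum>i\<le>D. c i *s fl (E i))"
    unfolding u SE_def c_def by (simp add: sum.reindex[OF flE_inj])
  also have "\<dots> = fl (\<Sum>i\<le>D. cscaleM (c i) (E i))" by (simp add: fl_sum fl_scale)
  finally have "B = (\<Sum>i\<le>D. cscaleM (c i) (E i))" by (rule fl_inj)
  then show ?thesis by blast
qed

lemma E_mult_BM: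
  assumes j: "j \<le> D" and B: "B \<in> BM" shows "\<exists>lam. E j ** B = cscaleM lam (E j)"
proof -
  obtain c where Bc: "B = (\<Sum>i\<le>D. cscaleM (c i) (E i))" using BM_span_E[OF B] by blast
  have "E j ** B = (\<Sum>i\<le>D. cscaleM (c i) (E j ** E i))"
    unfolding Bc by (simp add: mult_sum_right cscaleM_mult_right)
  also have "\<dots> = (\<Sum>i\<le>D. if i = j then cscaleM (c j) (E j) else 0)"
    by (rule sum.cong) (use j EE in auto)
  also have "\<dots> = cscaleM (c j) (E j)" using j by (simp add: sum.delta)
  finally show ?thesis by blast
qed

end

lemma csub_span_eq: "csubspace (W :: (complex^'n) set) \<Longrightarrow> span W = W"
  using csubspace_real span_eq_iff by blast

lemma dim_less_csub:
  fixes W W' :: "(complex^'n) set"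
  assumes "csubspace W" "csubspace W'" "W' \<subseteq> W" "W' \<noteq> W"
  shows "dim W' < dim W"
proof -
  have e1: "span W = W" using csub_span_eq[OF assms(1)] .
  have e2: "span W' = W'" using csub_span_eq[OF assms(2)] .
  have "span W' \<subset> span W" unfolding e1 e2 using assms(3,4) by blast
  then show ?thesis by (rule dim_psubset)
qed

context scheme begin

definition Pmod :: "'x \<Rightarrow> (complex^'x) set" where
  "Pmod x = {B *v axis x 1 | B. B \<in> BM}"

lemma Pmod_csub: "csubspace (Pmod x)"
  unfolding csubspace_def Pmod_def
proof (intro conjI ballI allI)
  show "0 \<in> {B *v axis x 1 |B. B \<in> BM}" using BM_zero by force
next
  fix u v assume "u \<in> {B *v axis x 1 |B. B \<in> BM}" "v \<in> {B *v axis x 1 |B. B \<in> BM}"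
  then obtain B C where "B \<in> BM" "C \<in> BM" "u = B *v axis x 1" "v = C *v axis x 1" by blast
  then show "u + v \<in> {B *v axis x 1 |B. B \<in> BM}"
    using BM_add by (force simp: matrix_vector_mult_add_rdistrib)
next
  fix c u assume "u \<in> {B *v axis x 1 |B. B \<in> BM}"
  then obtain B where "B \<in> BM" "u = B *v axis x 1" by blast
  then show "c *s u \<in> {B *v axis x 1 |B. B \<in> BM}"
    using BM_scale by (force simp: cscaleM_mulv)
qed

lemma dual_adj_mulv_nth: "(dual_adj E x i *v u) $ y = of_nat CARD('x) * E i $ x $ y * u $ y"
proof -
  have "(dual_adj E x i *v u) $ y = (\<Sum>c\<in>UNIV. (if c = y then of_nat CARD('x) * E i $ x $ y * u $ y else 0))"
    unfolding mulv_nth dual_adj_nth by (intro sum.cong) auto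
  then show ?thesis by (simp add: sum.delta')
qed

lemma Astar_P:
  assumes i: "i \<le> D" and B: "B \<in> BM"
  shows "\<exists>C\<in>BM. dual_adj E x i *v (B *v axis x 1) = C *v axis x 1"
proof -
  obtain c where c: "E i = (\<Sum>k\<le>D. cscaleM (c k) (A k))" using E_BM[OF i] by (auto simp: BM_iff)
  obtain d where d: "B = (\<Sum>k\<le>D. cscaleM (d k) (A k))" using B by (auto simp: BM_iff)
  define C where "C = (\<Sum>k\<le>D. cscaleM (of_nat CARD('x) * c k * d k) (A k))"
  have CB: "C \<in> BM" unfolding C_def BM_iff by (rule exI[where x="\<lambda>k. of_nat CARD('x) * c k * d k"]) simp
  have "(dual_adj E x i *v (B *v axis x 1)) $ y = (C *v axis x 1) $ y" for y
  proof -
    obtain k where k: "k \<le> D" "A k $ y $ x = 1" using A_ex by blast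
    have "(dual_adj E x i *v (B *v axis x 1)) $ y = of_nat CARD('x) * E i $ x $ y * B $ y $ x"
      by (simp add: dual_adj_mulv_nth mulv_axis)
    also have "E i $ x $ y = c k" using E_sym[OF i] BM_entry[OF c k] by simp
    also have "B $ y $ x = d k" using BM_entry[OF d k] .
    also have "of_nat CARD('x) * c k * d k = C $ y $ x" using BM_entry[OF C_def k] by simp
    finally show ?thesis by (simp add: mulv_axis)
  qed
  then show ?thesis using CB by (auto simp: vec_eq_iff)
qed

lemma T_P:
  assumes G: "G \<in> TT x"
  shows "\<forall>B\<in>BM. \<exists>C\<in>BM. G *v (B *v axis x 1) = C *v axis x 1"
  using G
proof (induction rule: terwilliger.induct)
  case (gen_A i)
  then show ?case by (metis A_BM BM_mult matrix_vector_mul_assoc)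
next
  case (gen_Astar i)
  then show ?case using Astar_P by blast
next
  case one
  then show ?case by auto
next
  case (add F G)
  show ?case
  proof
    fix B assume B: "B \<in> BM"
    obtain C1 C2 where "C1 \<in> BM" "C2 \<in> BM" "F *v (B *v axis x 1) = C1 *v axis x 1" "G *v (B *v axis x 1) = C2 *v axis x 1"
      using add.IH B by blast
    then show "\<exists>C\<in>BM. (F + G) *v (B *v axis x 1) = C *v axis x 1"
      by (intro bexI[where x="C1 + C2"]) (auto simp: matrix_vector_mult_add_rdistrib BM_add)
  qed
next
  case (scale F c)
  show ?case
  proof
    fix B assume B: "B \<in> BM"
    obtain C1 where "C1 \<in> BM" "F *v (B *v axis x 1) = C1 *v axis x 1"
      using scale.IH B by blast
    then show "\<exists>C\<in>BM. cscaleM c F *v (B *v axis x 1) = C *v axis x 1"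
      by (intro bexI[where x="cscaleM c C1"]) (auto simp: cscaleM_mulv BM_scale)
  qed
next
  case (mult F G)
  show ?case
  proof
    fix B assume B: "B \<in> BM"
    obtain C1 where C1: "C1 \<in> BM" "G *v (B *v axis x 1) = C1 *v axis x 1"
      using mult.IH(2) B by blast
    obtain C2 where C2: "C2 \<in> BM" "F *v (C1 *v axis x 1) = C2 *v axis x 1"
      using mult.IH(1) C1(1) by blast
    show "\<exists>C\<in>BM. (F ** G) *v (B *v axis x 1) = C *v axis x 1"
      using C1 C2 by (metis matrix_vector_mul_assoc)
  qed
qed

lemma Pmod_T: "T_module A E D x (Pmod x)"
  unfolding T_module_def
proof (intro conjI ballI Pmod_csub)
  fix G u assume G: "G \<in> TT x" and u: "u \<in> Pmod x"
  then obtain B where "B \<in> BM" "u = B *v axis x 1" unfolding Pmod_def by blast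
  then show "G *v u \<in> Pmod x" using T_P[OF G] unfolding Pmod_def by blast
qed

end

context scheme begin

definition Sset :: "'x \<Rightarrow> nat \<Rightarrow> (complex^'x) set" where
  "Sset x t = {v. \<forall>W. irred_T_module A E D x W \<and> 1 \<le> dual_endpoint E W \<and> dual_endpoint E W \<le> t
      \<longrightarrow> (\<forall>w\<in>W. herm v w = 0)}"

lemma Sset_T:
  assumes v: "v \<in> Sset x t" and G: "G \<in> TT x" shows "G *v v \<in> Sset x t"
  unfolding Sset_def
proof (intro CollectI allI impI ballI)
  fix W w assume W: "irred_T_module A E D x W \<and> 1 \<le> dual_endpoint E W \<and> dual_endpoint E W \<le> t" and w: "w \<in> W"
  have "hadj G *v w \<in> W" using T_module_mulv[OF irred_mod T_hadj[OF G] w] W by blast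
  then have "herm v (hadj G *v w) = 0" using v W unfolding Sset_def by blast
  then show "herm (G *v v) w = 0" by (simp add: herm_mult)
qed

lemma Sset_csub: "csubspace (Sset x t)"
  unfolding csubspace_def Sset_def
  by (auto simp: herm_add_left herm_scale_left)

lemma P_Sset: "Pmod x \<subseteq> Sset x t"
proof
  fix u assume "u \<in> Pmod x"
  then obtain B where B: "B \<in> BM" "u = B *v axis x 1" unfolding Pmod_def by blast
  show "u \<in> Sset x t"
    unfolding Sset_def
  proof (intro CollectI allI impI ballI)
    fix W w assume W: "irred_T_module A E D x W \<and> 1 \<le> dual_endpoint E W \<and> dual_endpoint E W \<le> t" and w: "w \<in> W"
    have hw: "hadj B *v w \<in> W" using T_module_mulv[OF irred_mod BM_T[OF BM_hadj[OF B(1)]] w] W by blast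
    have "herm u w = herm (axis x 1) (hadj B *v w)" using B(2) by (simp add: herm_mult)
    also have "\<dots> = 0" using herm_xhat_perp[OF irred_mod _ hw] W by blast
    finally show "herm u w = 0" .
  qed
qed

lemma E0_nth: "E 0 $ a $ b = 1 / of_nat CARD('x)"
  by (simp add: E0 allones_def)

lemma E0_perp:
  assumes v: "\<forall>p\<in>Pmod x. herm v p = 0" shows "E 0 *v v = 0"
proof -
  have "E 0 *v axis x 1 \<in> Pmod x" unfolding Pmod_def using E_BM[of 0] by blast
  then have "herm v (E 0 *v axis x 1) = 0" using v by blast
  moreover have "herm v (E 0 *v axis x 1) = cnj (1 / of_nat CARD('x)) * (\<Sum>y\<in>UNIV. v $ y)"
    by (simp add: herm_def mulv_axis E0_nth sum_divide_distrib)
  ultimately have s: "(\<Sum>y\<in>UNIV. v $ y) = 0" by simp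
  have "(E 0 *v v) $ a = 1 / of_nat CARD('x) * (\<Sum>y\<in>UNIV. v $ y)" for a
    by (simp add: mulv_nth E0_nth sum_divide_distrib)
  then show ?thesis using s by (simp add: vec_eq_iff)
qed

lemma key:
  assumes tD: "t \<le> D" and NM: "T_module A E D x N" and NS: "N \<subseteq> Sset x t"
    and NP: "\<forall>v\<in>N. \<forall>p\<in>Pmod x. herm v p = 0"
  shows "\<forall>v\<in>N. \<forall>j\<le>t. E j *v v = 0"
proof (rule ccontr)
  assume neg: "\<not> ?thesis"
  define Pr where "Pr Y \<longleftrightarrow> T_module A E D x Y \<and> Y \<subseteq> N \<and> (\<exists>w\<in>Y. \<exists>j\<le>t. E j *v w \<noteq> 0)" for Y
  have PrN: "Pr N" unfolding Pr_def using NM neg by blast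
  define m where "m = (LEAST n. \<exists>Y. Pr Y \<and> dim Y = n)"
  have "\<exists>Y. Pr Y \<and> dim Y = m" unfolding m_def by (rule LeastI_ex) (use PrN in blast)
  then obtain W where PW: "Pr W" and dW: "dim W = m" by blast
  have minimal: "m \<le> dim Y" if "Pr Y" for Y
    unfolding m_def by (rule Least_le) (use that in blast)
  have WM: "T_module A E D x W" and WN: "W \<subseteq> N" using PW Pr_def by auto
  obtain w j where w: "w \<in> W" "j \<le> t" "E j *v w \<noteq> 0" using PW Pr_def by blast
  have Wc: "csubspace W" using T_module_csub[OF WM] .
  have Wnz: "W \<noteq> {0}" using w by auto
  have irr: "irred_T_module A E D x W"
    unfolding irred_T_module_def
  proof (intro conjI WM Wnz allI impI)
    fix W' assume W': "T_module A E D x W' \<and> W' \<subseteq> W"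
    have W'M: "T_module A E D x W'" and W'W: "W' \<subseteq> W" using W' by auto
    have W'c: "csubspace W'" using T_module_csub[OF W'M] .
    show "W' = {0} \<or> W' = W"
    proof (rule ccontr)
      assume "\<not> (W' = {0} \<or> W' = W)"
      then have nz: "W' \<noteq> {0}" and ne: "W' \<noteq> W" by auto
      have dlt: "dim W' < dim W" using dim_less_csub[OF Wc W'c W'W ne] .
      show False
      proof (cases "Pr W'")
        case True
        then show False using minimal[OF True] dW dlt by simp
      next
        case False
        then have W'0: "\<forall>u\<in>W'. \<forall>i\<le>t. E i *v u = 0" unfolding Pr_def using W'M W'W WN by blast
        define W'' where "W'' = {u \<in> W. \<forall>u'\<in>W'. herm u u' = 0}"
        have W''c: "csubspace W''"
          unfolding csubspace_def W''_def using Wc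
          by (auto simp: herm_add_left herm_scale_left csub_zero csub_add csub_scale)
        have W''M: "T_module A E D x W''"
          unfolding T_module_def
        proof (intro conjI ballI W''c)
          fix G u assume G: "G \<in> TT x" and u: "u \<in> W''"
          have "G *v u \<in> W" using T_module_mulv[OF WM G] u W''_def by blast
          moreover have "herm (G *v u) u' = 0" if "u' \<in> W'" for u'
          proof -
            have "hadj G *v u' \<in> W'" using T_module_mulv[OF W'M T_hadj[OF G] that] .
            then show ?thesis using u W''_def by (simp add: herm_mult)
          qed
          ultimately show "G *v u \<in> W''" unfolding W''_def by blast
        qed
        obtain a where a: "a \<in> W'" "\<forall>u'\<in>W'. herm (w - a) u' = 0" using orth_decomp[OF W'c] by blast
        have bW: "w - a \<in> W''" unfolding W''_def using a w(1) W'W csub_diff[OF Wc] by blast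
        have "E j *v (w - a) = E j *v w" using W'0 a(1) w(2) by (simp add: matrix_vector_mult_diff_distrib)
        then have "E j *v (w - a) \<noteq> 0" using w(3) by simp
        then have PrW'': "Pr W''" unfolding Pr_def using W''M bW w(2) WN W''_def by blast
        obtain u' where u': "u' \<in> W'" "u' \<noteq> 0" using nz csub_zero[OF W'c] by blast
        have "u' \<notin> W''"
        proof
          assume "u' \<in> W''"
          then have "herm u' u' = 0" using u' W''_def by blast
          then show False using u' by (simp add: herm_self_eq_0)
        qed
        then have "W'' \<noteq> W" using u' W'W by blast
        then have "dim W'' < dim W" using dim_less_csub[OF Wc W''c] W''_def by blast
        then show False using minimal[OF PrW''] dW by simp
      qed
    qed
  qed
  define r where "r = dual_endpoint E W"
  have rt: "r \<le> t" unfolding r_def dual_endpoint_def by (rule le_trans[OF Least_le]) (use w in blast)+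
  have r1: "1 \<le> r"
  proof (rule ccontr)
    assume "\<not> 1 \<le> r"
    then have "r = 0" by simp
    then obtain w0 where "w0 \<in> W" "E 0 *v w0 \<noteq> 0" using endpoint_props(2)[OF Wc Wnz] r_def by auto
    moreover have "E 0 *v w0 = 0" using E0_perp NP WN \<open>w0 \<in> W\<close> by blast
    ultimately show False by simp
  qed
  have "\<forall>u\<in>W. herm w u = 0" using NS WN w(1) irr r1 rt r_def unfolding Sset_def by blast
  then have "herm w w = 0" using w(1) by blast
  then have "w = 0" by (simp add: herm_self_eq_0)
  then show False using w(3) by simp
qed

lemma part_i_ii:
  assumes tD: "t \<le> D" and i: "\<chi>' \<in> Sset x t" and F: "F \<in> TT x"
  shows "relative_design E t x (F *v \<chi>')"
  unfolding relative_design_def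
proof
  fix j assume j: "j \<in> {1..t}"
  then have jD: "j \<le> D" "j \<le> t" using tD by auto
  define \<psi> where "\<psi> = F *v \<chi>'"
  have psiS: "\<psi> \<in> Sset x t" unfolding \<psi>_def using Sset_T[OF i F] .
  obtain p where p: "p \<in> Pmod x" "\<forall>u\<in>Pmod x. herm (\<psi> - p) u = 0" using orth_decomp[OF Pmod_csub] by blast
  define q where "q = \<psi> - p"
  define N where "N = {v \<in> Sset x t. \<forall>u\<in>Pmod x. herm v u = 0}"
  have Nc: "csubspace N"
    unfolding csubspace_def N_def using Sset_csub
    by (auto simp: herm_add_left herm_scale_left csub_zero csub_add csub_scale)
  have NM: "T_module A E D x N"
    unfolding T_module_def
  proof (intro conjI ballI Nc)
    fix G u assume G: "G \<in> TT x" and u: "u \<in> N"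
    have "G *v u \<in> Sset x t" using Sset_T[OF _ G] u N_def by blast
    moreover have "herm (G *v u) u' = 0" if "u' \<in> Pmod x" for u'
    proof -
      have "hadj G *v u' \<in> Pmod x" using T_module_mulv[OF Pmod_T T_hadj[OF G] that] .
      then show ?thesis using u N_def by (simp add: herm_mult)
    qed
    ultimately show "G *v u \<in> N" unfolding N_def by blast
  qed
  have qS: "q \<in> Sset x t" unfolding q_def using psiS P_Sset p(1) csub_diff[OF Sset_csub] by blast
  have qN: "q \<in> N" unfolding N_def q_def using qS q_def p(2) by blast
  have Eq: "E j *v q = 0" using key[OF tD NM _ _] qN jD N_def by blast
  obtain B where B: "B \<in> BM" "p = B *v axis x 1" using p(1) unfolding Pmod_def by blast
  obtain lam where lam: "E j ** B = cscaleM lam (E j)" using E_mult_BM[OF jD(1) B(1)] by blast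
  have "E j *v \<psi> = E j *v p + E j *v q" unfolding q_def by (simp add: matrix_vector_right_distrib[symmetric])
  also have "\<dots> = lam *s (E j *v axis x 1)" using Eq B(2) lam by (simp add: matrix_vector_mul_assoc cscaleM_mulv)
  finally have "1 *s (E j *v \<psi>) + (- lam) *s (E j *v axis x 1) = 0" by simp
  then show "lin_dep2 (E j *v (F *v \<chi>')) (E j *v axis x 1)"
    unfolding lin_dep2_def \<psi>_def by (intro exI[where x=1] exI[where x="- lam"]) simp
qed

end

locale cscheme = scheme A E D for A E :: "nat \<Rightarrow> complex^'x::finite^'x" and D :: nat +
  assumes com: "cometric E D" and D1: "1 \<le> D"
begin

lemma com_poly:
  assumes j: "j \<le> D"
  shows "\<exists>p. degree p = j \<and> (\<forall>a b. E j $ a $ b = (\<Sum>l\<le>j. coeff p l * (E 1 $ a $ b) ^ l))"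
proof -
  obtain p :: "complex poly" where p: "degree p = j" "E j = (\<chi> a b. poly p (E 1 $ a $ b))"
    using com j unfolding cometric_def by blast
  then show ?thesis by (intro exI[where x=p]) (simp add: poly_altdef)
qed

definition Hp :: "nat \<Rightarrow> complex^'x^'x" where
  "Hp l = (\<chi> a b. (E 1 $ a $ b) ^ l)"

definition Espan :: "nat \<Rightarrow> (complex^'x^'x) set" where
  "Espan m = {B. \<exists>c. B = (\<Sum>i\<le>m. cscaleM (c i) (E i))}"

lemma Espan_add: "B \<in> Espan m \<Longrightarrow> C \<in> Espan m \<Longrightarrow> B + C \<in> Espan m"
proof -
  assume "B \<in> Espan m" "C \<in> Espan m"
  then obtain c d where "B = (\<Sum>i\<le>m. cscaleM (c i) (E i))" "C = (\<Sum>i\<le>m. cscaleM (d i) (E i))"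
    unfolding Espan_def by blast
  then have eq: "B + C = (\<Sum>i\<le>m. cscaleM (c i + d i) (E i))"
    by (simp add: sum.distrib cscaleM_add2)
  show ?thesis unfolding Espan_def by (rule CollectI, rule exI[where x="\<lambda>i. c i + d i"]) (simp add: eq)
qed

lemma Espan_scale: "B \<in> Espan m \<Longrightarrow> cscaleM a B \<in> Espan m"
proof -
  assume "B \<in> Espan m"
  then obtain c where "B = (\<Sum>i\<le>m. cscaleM (c i) (E i))" unfolding Espan_def by blast
  then have eq: "cscaleM a B = (\<Sum>i\<le>m. cscaleM (a * c i) (E i))"
    by (simp add: vec_eq_iff sum_mat_nth sum_distrib_left mult.assoc)
  show ?thesis unfolding Espan_def by (rule CollectI, rule exI[where x="\<lambda>i. a * c i"]) (simp add: eq)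
qed

lemma Espan_zero: "0 \<in> Espan m"
  unfolding Espan_def by (rule CollectI, rule exI[where x="\<lambda>i. 0"]) simp

lemma Espan_sum: "finite S \<Longrightarrow> (\<And>i. i \<in> S \<Longrightarrow> f i \<in> Espan m) \<Longrightarrow> (\<Sum>i\<in>S. f i) \<in> Espan m"
  by (induction S rule: finite_induct) (auto simp: Espan_zero Espan_add)

lemma Espan_diff: "B \<in> Espan m \<Longrightarrow> C \<in> Espan m \<Longrightarrow> B - C \<in> Espan m"
proof -
  assume "B \<in> Espan m" "C \<in> Espan m"
  then have "B + cscaleM (-1) C \<in> Espan m" using Espan_add Espan_scale by blast
  moreover have "B + cscaleM (-1) C = B - C" by (simp add: vec_eq_iff)
  ultimately show ?thesis by simp
qed

lemma Espan_E: "i \<le> m \<Longrightarrow> E i \<in> Espan m"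
proof -
  assume i: "i \<le> m"
  have eq: "E i = (\<Sum>k\<le>m. cscaleM (if k = i then 1 else 0) (E k))"
    using i by (simp add: if_distrib[of "\<lambda>c. cscaleM c _"] sum.delta cong: if_cong)
  show ?thesis unfolding Espan_def by (rule CollectI, rule exI[where x="\<lambda>k. if k = i then 1 else 0"]) (simp only: eq)
qed

lemma Espan_mono: "m \<le> m' \<Longrightarrow> B \<in> Espan m \<Longrightarrow> B \<in> Espan m'"
proof -
  assume m: "m \<le> m'" and "B \<in> Espan m"
  then obtain c where "B = (\<Sum>i\<le>m. cscaleM (c i) (E i))" unfolding Espan_def by blast
  moreover have "(\<Sum>i\<le>m. cscaleM (c i) (E i)) \<in> Espan m'"
    using m by (intro Espan_sum Espan_scale Espan_E) auto
  ultimately show ?thesis by simp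
qed

lemma E0_nth': "E 0 $ a $ b = 1 / of_nat CARD('x)"
  by (simp add: E0 allones_def)

lemma Hp_Espan: "m \<le> D \<Longrightarrow> Hp m \<in> Espan m"
proof (induction m rule: less_induct)
  case (less m)
  show ?case
  proof (cases "m = 0")
    case True
    have "Hp 0 = cscaleM (of_nat CARD('x)) (E 0)"
      by (simp add: vec_eq_iff Hp_def E0_nth')
    then show ?thesis using True Espan_scale Espan_E by simp
  next
    case False
    obtain p where p: "degree p = m" "\<And>a b. E m $ a $ b = (\<Sum>l\<le>m. coeff p l * (E 1 $ a $ b) ^ l)"
      using com_poly[OF less.prems] by blast
    have pnz: "p \<noteq> 0" using p(1) False by auto
    define cm where "cm = coeff p m"
    have cm: "cm \<noteq> 0" using pnz p(1) cm_def by (metis leading_coeff_0_iff)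
    define R where "R = E m - (\<Sum>l<m. cscaleM (coeff p l) (Hp l))"
    have "Hp m = cscaleM (1 / cm) R"
    proof -
      have "R $ a $ b = cm * Hp m $ a $ b" for a b
      proof -
        have "E m $ a $ b = (\<Sum>l<m. coeff p l * Hp l $ a $ b) + cm * Hp m $ a $ b"
          using p(2)[of a b] by (simp add: Hp_def cm_def lessThan_Suc_atMost[symmetric])
        then show ?thesis by (simp add: R_def sum_mat_nth)
      qed
      then show ?thesis using cm by (simp add: vec_eq_iff)
    qed
    moreover have "R \<in> Espan m"
      unfolding R_def
    proof (intro Espan_diff Espan_E Espan_sum Espan_scale)
      fix l assume "l \<in> {..<m}"
      then have "l < m" by simp
      then show "Hp l \<in> Espan m" using less.IH[of l] less.prems Espan_mono[of l m] by simp
    qed simp_all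
    ultimately show ?thesis using Espan_scale by simp
  qed
qed

lemma trace_orth:
  assumes i: "i \<le> D" and k: "k \<le> D" and ik: "i \<noteq> k"
  shows "(\<Sum>a\<in>UNIV. \<Sum>b\<in>UNIV. E i $ a $ b * E k $ a $ b) = 0"
proof -
  have "(\<Sum>a\<in>UNIV. \<Sum>b\<in>UNIV. E i $ a $ b * E k $ a $ b) = (\<Sum>a\<in>UNIV. (E i ** E k) $ a $ a)"
    by (simp add: mat_mult_nth E_sym[OF k])
  also have "\<dots> = 0" using EE[OF i k] ik by simp
  finally show ?thesis .
qed

lemma Espan_orth:
  assumes B: "B \<in> Espan m" and mk: "m < k" and k: "k \<le> D"
  shows "(\<Sum>a\<in>UNIV. \<Sum>b\<in>UNIV. B $ a $ b * E k $ a $ b) = 0"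
proof -
  obtain c where c: "B = (\<Sum>i\<le>m. cscaleM (c i) (E i))" using B unfolding Espan_def by blast
  have "(\<Sum>a\<in>UNIV. \<Sum>b\<in>UNIV. B $ a $ b * E k $ a $ b)
      = (\<Sum>a\<in>UNIV. \<Sum>b\<in>UNIV. \<Sum>i\<le>m. c i * (E i $ a $ b * E k $ a $ b))"
    unfolding c by (simp add: sum_mat_nth sum_distrib_right mult.assoc)
  also have "\<dots> = (\<Sum>a\<in>UNIV. \<Sum>i\<le>m. \<Sum>b\<in>UNIV. c i * (E i $ a $ b * E k $ a $ b))"
    by (rule sum.cong[OF refl]) (rule sum.swap)
  also have "\<dots> = (\<Sum>i\<le>m. \<Sum>a\<in>UNIV. \<Sum>b\<in>UNIV. c i * (E i $ a $ b * E k $ a $ b))"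
    by (rule sum.swap)
  also have "\<dots> = (\<Sum>i\<le>m. c i * (\<Sum>a\<in>UNIV. \<Sum>b\<in>UNIV. E i $ a $ b * E k $ a $ b))"
    by (simp add: sum_distrib_left)
  also have "\<dots> = 0"
    using mk k trace_orth by (intro sum.neutral) auto
  finally show ?thesis .
qed

lemma krein_zero:
  assumes j: "j \<le> D" and k: "k \<le> D" and jk: "Suc j < k"
  shows "(\<Sum>a\<in>UNIV. \<Sum>b\<in>UNIV. E 1 $ a $ b * E j $ a $ b * E k $ a $ b) = 0"
proof -
  obtain p where p: "degree p = j" "\<And>a b. E j $ a $ b = (\<Sum>l\<le>j. coeff p l * (E 1 $ a $ b) ^ l)"
    using com_poly[OF j] by blast
  define M where "M = (\<Sum>l\<le>j. cscaleM (coeff p l) (Hp (Suc l)))"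
  have Mnth: "M $ a $ b = E 1 $ a $ b * E j $ a $ b" for a b
    unfolding M_def p(2) by (simp add: sum_mat_nth Hp_def sum_distrib_left mult_ac)
  have "M \<in> Espan (Suc j)"
    unfolding M_def
  proof (intro Espan_sum Espan_scale)
    fix l assume "l \<in> {..j}"
    then have "Suc l \<le> Suc j" "Suc l \<le> D" using jk k by auto
    then show "Hp (Suc l) \<in> Espan (Suc j)" using Hp_Espan Espan_mono by blast
  qed simp
  then have "(\<Sum>a\<in>UNIV. \<Sum>b\<in>UNIV. M $ a $ b * E k $ a $ b) = 0" using Espan_orth jk k by blast
  then show ?thesis by (simp add: Mnth)
qed

end

lemma sum_swap4:
  fixes F :: "'a \<Rightarrow> 'b \<Rightarrow> 'c \<Rightarrow> 'd \<Rightarrow> complex"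
  assumes "finite S1" "finite S2" "finite S3" "finite Dd"
  shows "(\<Sum>p\<in>S1. \<Sum>q\<in>S2. \<Sum>y\<in>S3. \<Sum>w\<in>Dd. F p q y w) = (\<Sum>y\<in>S3. \<Sum>w\<in>Dd. \<Sum>p\<in>S1. \<Sum>q\<in>S2. F p q y w)"
proof -
  have "(\<Sum>p\<in>S1. \<Sum>q\<in>S2. \<Sum>y\<in>S3. \<Sum>w\<in>Dd. F p q y w) = (\<Sum>p\<in>S1. \<Sum>y\<in>S3. \<Sum>w\<in>Dd. \<Sum>q\<in>S2. F p q y w)"
  proof (rule sum.cong[OF refl])
    fix p
    have "(\<Sum>q\<in>S2. \<Sum>y\<in>S3. \<Sum>w\<in>Dd. F p q y w) = (\<Sum>y\<in>S3. \<Sum>q\<in>S2. \<Sum>w\<in>Dd. F p q y w)" by (rule sum.swap)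
    also have "\<dots> = (\<Sum>y\<in>S3. \<Sum>w\<in>Dd. \<Sum>q\<in>S2. F p q y w)" by (rule sum.cong[OF refl]) (rule sum.swap)
    finally show "(\<Sum>q\<in>S2. \<Sum>y\<in>S3. \<Sum>w\<in>Dd. F p q y w) = (\<Sum>y\<in>S3. \<Sum>w\<in>Dd. \<Sum>q\<in>S2. F p q y w)" .
  qed
  also have "\<dots> = (\<Sum>y\<in>S3. \<Sum>p\<in>S1. \<Sum>w\<in>Dd. \<Sum>q\<in>S2. F p q y w)" by (rule sum.swap)
  also have "\<dots> = (\<Sum>y\<in>S3. \<Sum>w\<in>Dd. \<Sum>p\<in>S1. \<Sum>q\<in>S2. F p q y w)" by (rule sum.cong[OF refl]) (rule sum.swap)
  finally show ?thesis .
qed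

context cscheme begin

definition gv :: "nat \<Rightarrow> 'x \<Rightarrow> 'x \<Rightarrow> complex^'x" where
  "gv j x' z = (\<chi> y. E 1 $ x' $ y * E j $ y $ z)"

lemma sum_prod3: "(\<Sum>p\<in>S. f p) * (\<Sum>q\<in>T. g q) * (c::complex) = (\<Sum>p\<in>S. \<Sum>q\<in>T. f p * g q * c)"
proof -
  have "(\<Sum>p\<in>S. f p) * (\<Sum>q\<in>T. g q) = (\<Sum>p\<in>S. \<Sum>q\<in>T. f p * g q)" by (rule sum_product)
  then show ?thesis by (simp add: sum_distrib_right)
qed

lemma E_self_sum: "i \<le> D \<Longrightarrow> (\<Sum>c\<in>UNIV. E i $ c $ y * E i $ c $ w) = E i $ y $ w"
proof -
  assume i: "i \<le> D"
  have "(\<Sum>c\<in>UNIV. E i $ c $ y * E i $ c $ w) = (E i ** E i) $ y $ w"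
    by (simp add: mat_mult_nth E_sym[OF i, of _ y])
  then show ?thesis using E_idem[OF i] by simp
qed

lemma E_self_sum2: "i \<le> D \<Longrightarrow> (\<Sum>c\<in>UNIV. E i $ y $ c * E i $ w $ c) = E i $ y $ w"
proof -
  assume i: "i \<le> D"
  have "(\<Sum>c\<in>UNIV. E i $ y $ c * E i $ w $ c) = (E i ** E i) $ y $ w"
    by (simp add: mat_mult_nth E_sym[OF i, of w])
  then show ?thesis using E_idem[OF i] by simp
qed

lemma herm_Eg:
  assumes j: "j \<le> D" and k: "k \<le> D"
  shows "herm (E k *v gv j x' z) (E k *v gv j x' z)
    = (\<Sum>y\<in>UNIV. \<Sum>w\<in>UNIV. (E 1 $ x' $ y * E 1 $ x' $ w) * (E j $ y $ z * E j $ w $ z) * E k $ y $ w)"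
proof -
  have r1: "cnj (E (Suc 0) $ a $ b) = E (Suc 0) $ a $ b" for a b using E_real D1 by simp
  have rj: "cnj (E j $ a $ b) = E j $ a $ b" for a b using E_real j by blast
  have rk: "cnj (E k $ a $ b) = E k $ a $ b" for a b using E_real k by blast
  have "herm (E k *v gv j x' z) (E k *v gv j x' z) = herm (gv j x' z) (E k *v (E k *v gv j x' z))"
    using herm_E[OF k] by simp
  also have "\<dots> = herm (gv j x' z) (E k *v gv j x' z)" using E_idem_v[OF k] by simp
  also have "\<dots> = (\<Sum>y\<in>UNIV. \<Sum>w\<in>UNIV. (E 1 $ x' $ y * E j $ y $ z) * (E k $ y $ w * (E 1 $ x' $ w * E j $ w $ z)))"
    by (simp add: herm_def mulv_nth gv_def r1 rj rk sum_distrib_left)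
  also have "\<dots> = (\<Sum>y\<in>UNIV. \<Sum>w\<in>UNIV. (E 1 $ x' $ y * E 1 $ x' $ w) * (E j $ y $ z * E j $ w $ z) * E k $ y $ w)"
    by (simp add: mult_ac)
  finally show ?thesis .
qed

lemma cgs:
  assumes j: "j \<le> D" and k: "k \<le> D" and jk: "Suc j < k"
  shows "E k *v gv j x' z = 0"
proof -
  define R where "R x' z = (\<Sum>y\<in>UNIV. (cmod ((E k *v gv j x' z) $ y))^2)" for x' z
  have hR: "herm (E k *v gv j x' z) (E k *v gv j x' z) = complex_of_real (R x' z)" for x' z
    unfolding R_def by (rule herm_self)
  have "(\<Sum>p\<in>UNIV. \<Sum>q\<in>UNIV. herm (E k *v gv j p q) (E k *v gv j p q))
      = (\<Sum>p\<in>UNIV. \<Sum>q\<in>UNIV. \<Sum>y\<in>UNIV. \<Sum>w\<in>UNIV. (E 1 $ p $ y * E 1 $ p $ w) * (E j $ y $ q * E j $ w $ q) * E k $ y $ w)"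
    by (simp add: herm_Eg[OF j k])
  also have "\<dots> = (\<Sum>y\<in>UNIV. \<Sum>w\<in>UNIV. \<Sum>p\<in>UNIV. \<Sum>q\<in>UNIV. (E 1 $ p $ y * E 1 $ p $ w) * (E j $ y $ q * E j $ w $ q) * E k $ y $ w)"
    by (rule sum_swap4) auto
  also have "\<dots> = (\<Sum>y\<in>UNIV. \<Sum>w\<in>UNIV. (\<Sum>p\<in>UNIV. E 1 $ p $ y * E 1 $ p $ w) * (\<Sum>q\<in>UNIV. E j $ y $ q * E j $ w $ q) * E k $ y $ w)"
    by (simp only: sum_prod3)
  also have "\<dots> = (\<Sum>y\<in>UNIV. \<Sum>w\<in>UNIV. E 1 $ y $ w * E j $ y $ w * E k $ y $ w)"
    using E_self_sum[of 1] E_self_sum2[OF j] D1 by simp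
  also have "\<dots> = 0" using krein_zero[OF j k jk] .
  finally have z: "(\<Sum>p\<in>UNIV. \<Sum>q\<in>UNIV. complex_of_real (R p q)) = 0" by (simp add: hR)
  have "complex_of_real (\<Sum>p\<in>UNIV. \<Sum>q\<in>UNIV. R p q) = (\<Sum>p\<in>UNIV. \<Sum>q\<in>UNIV. complex_of_real (R p q))"
    by (simp only: of_real_sum)
  also have "\<dots> = 0" by (rule z)
  finally have "complex_of_real (\<Sum>p\<in>UNIV. \<Sum>q\<in>UNIV. R p q) = 0" .
  then have s0: "(\<Sum>p\<in>UNIV. \<Sum>q\<in>UNIV. R p q) = 0" by (simp only: of_real_eq_0_iff)
  have Rnn: "0 \<le> R p q" for p q unfolding R_def by (intro sum_nonneg) simp
  have "\<forall>p\<in>UNIV. (\<Sum>q\<in>UNIV. R p q) = 0"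
    using s0 by (subst sum_nonneg_eq_0_iff[symmetric]) (auto intro: sum_nonneg Rnn)
  then have "(\<Sum>q\<in>UNIV. R x' q) = 0" by simp
  then have "\<forall>q\<in>UNIV. R x' q = 0" by (subst sum_nonneg_eq_0_iff[symmetric]) (auto intro: Rnn)
  then have "R x' z = 0" by simp
  then have "herm (E k *v gv j x' z) (E k *v gv j x' z) = 0" by (simp add: hR)
  then show ?thesis by (simp add: herm_self_eq_0)
qed

lemma tridiag:
  assumes j: "j \<le> D" and k: "k \<le> D" and jk: "Suc j < k"
  shows "E k *v (dual_adj E x 1 *v (E j *v u)) = 0"
proof -
  have "dual_adj E x 1 *v (E j *v u) = (\<Sum>z\<in>UNIV. (of_nat CARD('x) * u $ z) *s gv j x z)"
  proof -
    have "(dual_adj E x 1 *v (E j *v u)) $ y = (\<Sum>z\<in>UNIV. (of_nat CARD('x) * u $ z) *s gv j x z) $ y" for y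
      by (simp only: dual_adj_mulv_nth) (simp add: mulv_nth gv_def sum_component sum_distrib_left mult_ac)
    then show ?thesis by (simp add: vec_eq_iff)
  qed
  then have "E k *v (dual_adj E x 1 *v (E j *v u)) = (\<Sum>z\<in>UNIV. (of_nat CARD('x) * u $ z) *s (E k *v gv j x z))"
    by (simp add: mulv_sum mulv_scale)
  also have "\<dots> = 0" using cgs[OF j k jk] by simp
  finally show ?thesis .
qed

end

context cscheme begin

lemma dual_idem_mulv_nth: "(dual_idem A x k *v v) $ y = A k $ x $ y * v $ y"
proof -
  have "(dual_idem A x k *v v) $ y = (\<Sum>c\<in>UNIV. (if c = y then A k $ x $ y * v $ y else 0))"
    unfolding mulv_nth dual_idem_def by (intro sum.cong) auto
  then show ?thesis by (simp add: sum.delta')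
qed

definition Uspan :: "'x \<Rightarrow> complex^'x \<Rightarrow> (complex^'x) set" where
  "Uspan x v = {u. \<exists>a. u = (\<Sum>k\<le>D. a k *s (dual_idem A x k *v v))}"

lemma Uspan_csub: "csubspace (Uspan x v)"
  unfolding csubspace_def
proof (intro conjI ballI allI)
  show "0 \<in> Uspan x v" unfolding Uspan_def by (rule CollectI, rule exI[where x="\<lambda>k. 0"]) simp
next
  fix u w assume "u \<in> Uspan x v" "w \<in> Uspan x v"
  then obtain a b where ab: "u = (\<Sum>k\<le>D. a k *s (dual_idem A x k *v v))" "w = (\<Sum>k\<le>D. b k *s (dual_idem A x k *v v))"
    unfolding Uspan_def by blast
  have eq: "u + w = (\<Sum>k\<le>D. (a k + b k) *s (dual_idem A x k *v v))"
    unfolding ab by (simp add: sum.distrib vector_sadd_rdistrib)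
  show "u + w \<in> Uspan x v" unfolding Uspan_def by (rule CollectI, rule exI[where x="\<lambda>k. a k + b k"]) (rule eq)
next
  fix c u assume "u \<in> Uspan x v"
  then obtain a where a: "u = (\<Sum>k\<le>D. a k *s (dual_idem A x k *v v))" unfolding Uspan_def by blast
  have eq: "c *s u = (\<Sum>k\<le>D. (c * a k) *s (dual_idem A x k *v v))"
    unfolding a by (simp add: vec_eq_iff sum_component sum_distrib_left mult.assoc)
  show "c *s u \<in> Uspan x v" unfolding Uspan_def by (rule CollectI, rule exI[where x="\<lambda>k. c * a k"]) (rule eq)
qed

lemma Uspan_self: "v \<in> Uspan x v"
proof -
  have "(\<Sum>k\<le>D. 1 *s (dual_idem A x k *v v)) $ y = v $ y" for y
    by (simp add: sum_component dual_idem_mulv_nth sum_distrib_right[symmetric] sumA_nth)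
  then have eq: "v = (\<Sum>k\<le>D. 1 *s (dual_idem A x k *v v))" by (simp add: vec_eq_iff)
  show ?thesis unfolding Uspan_def by (rule CollectI, rule exI[where x="\<lambda>k. 1"]) (rule eq)
qed

lemma Uspan_A1:
  assumes u: "u \<in> Uspan x v" shows "dual_adj E x 1 *v u \<in> Uspan x v"
proof -
  obtain a where a: "u = (\<Sum>k\<le>D. a k *s (dual_idem A x k *v v))" using u unfolding Uspan_def by blast
  obtain c where c: "E 1 = (\<Sum>k\<le>D. cscaleM (c k) (A k))" using E_BM[of 1] D1 by (auto simp: BM_iff)
  have one: "dual_adj E x 1 *v (dual_idem A x k *v v) = (of_nat CARD('x) * c k) *s (dual_idem A x k *v v)"
    if k: "k \<le> D" for k
  proof -
    have "of_nat CARD('x) * E 1 $ x $ y * (A k $ x $ y * v $ y) = of_nat CARD('x) * c k * (A k $ x $ y * v $ y)" for y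
    proof (cases "A k $ x $ y = 1")
      case True
      then show ?thesis using BM_entry[OF c k True] by simp
    next
      case False
      then have "A k $ x $ y = 0" using A01[OF k] by blast
      then show ?thesis by simp
    qed
    then show ?thesis by (simp add: vec_eq_iff dual_adj_mulv_nth dual_idem_mulv_nth)
  qed
  have "dual_adj E x 1 *v u = (\<Sum>k\<le>D. a k *s (dual_adj E x 1 *v (dual_idem A x k *v v)))"
    unfolding a by (simp only: mulv_sum finite_atMost mulv_scale)
  also have "\<dots> = (\<Sum>k\<le>D. (a k * (of_nat CARD('x) * c k)) *s (dual_idem A x k *v v))"
  proof (rule sum.cong[OF refl])
    fix k assume "k \<in> {..D}"
    then have "k \<le> D" by simp
    then show "a k *s (dual_adj E x 1 *v (dual_idem A x k *v v)) = (a k * (of_nat CARD('x) * c k)) *s (dual_idem A x k *v v)"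
      by (simp only: one vector_smult_assoc)
  qed
  finally have eq: "dual_adj E x 1 *v u = (\<Sum>k\<le>D. (a k * (of_nat CARD('x) * c k)) *s (dual_idem A x k *v v))" .
  show ?thesis unfolding Uspan_def by (rule CollectI, rule exI[where x="\<lambda>k. a k * (of_nat CARD('x) * c k)"]) (rule eq)
qed

lemma Uspan_perp:
  assumes h: "\<forall>k\<le>D. herm \<chi>' (dual_idem A x k *v v) = 0" and u: "u \<in> Uspan x v"
  shows "herm \<chi>' u = 0"
proof -
  obtain a where a: "u = (\<Sum>k\<le>D. a k *s (dual_idem A x k *v v))" using u unfolding Uspan_def by blast
  show ?thesis unfolding a using h by (simp add: herm_sum_right herm_scale_right)
qed

definition Dl :: "'x \<Rightarrow> nat \<Rightarrow> complex^'x^'x" where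
  "Dl x l = (\<chi> a b. if a = b then (E 1 $ x $ a) ^ l else 0)"

lemma Dl_mulv_nth: "(Dl x l *v y) $ b = (E 1 $ x $ b) ^ l * y $ b"
proof -
  have "(Dl x l *v y) $ b = (\<Sum>c\<in>UNIV. (if c = b then (E 1 $ x $ b) ^ l * y $ b else 0))"
    unfolding mulv_nth Dl_def by (intro sum.cong) auto
  then show ?thesis by (simp add: sum.delta')
qed

lemma poly_closed:
  assumes Y: "csubspace Y" and c1: "\<And>y. y \<in> Y \<Longrightarrow> dual_adj E x 1 *v y \<in> Y"
    and i: "i \<le> D" and y: "y \<in> Y"
  shows "dual_adj E x i *v y \<in> Y"
proof -
  have DlY: "Dl x l *v y \<in> Y" for l
  proof (induction l)
    case 0
    have "Dl x 0 *v y = y" by (simp add: vec_eq_iff Dl_mulv_nth)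
    then show ?case using y by simp
  next
    case (Suc l)
    have "Dl x (Suc l) *v y = (1 / of_nat CARD('x)) *s (dual_adj E x 1 *v (Dl x l *v y))"
      by (simp add: vec_eq_iff Dl_mulv_nth dual_adj_mulv_nth)
    then show ?case using csub_scale[OF Y c1[OF Suc.IH]] by simp
  qed
  obtain p where p: "degree p = i" "\<And>a b. E i $ a $ b = (\<Sum>l\<le>i. coeff p l * (E 1 $ a $ b) ^ l)"
    using com_poly[OF i] by blast
  have "dual_adj E x i *v y = (\<Sum>l\<le>i. (of_nat CARD('x) * coeff p l) *s (Dl x l *v y))"
    by (simp add: vec_eq_iff dual_adj_mulv_nth Dl_mulv_nth sum_component p(2) sum_distrib_left sum_distrib_right mult_ac)
  also have "\<dots> \<in> Y" using DlY by (intro csub_sum[OF Y] csub_scale[OF Y]) auto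
  finally show ?thesis .
qed

end

context cscheme begin

lemma thin_ratio:
  assumes th: "dual_thin E D W" and j: "j \<le> D" and u1: "u1 \<in> W" and u2: "u2 \<in> W" and nz: "E j *v u2 \<noteq> 0"
  shows "\<exists>c. E j *v u1 = c *s (E j *v u2)"
proof -
  obtain vj where vj: "\<forall>w\<in>W. \<exists>c. E j *v w = c *s vj" using th j unfolding dual_thin_def by blast
  obtain c1 c2 where c1: "E j *v u1 = c1 *s vj" and c2: "E j *v u2 = c2 *s vj" using vj u1 u2 by blast
  have "c2 \<noteq> 0" using nz c2 by auto
  then have "E j *v u1 = (c1 / c2) *s (E j *v u2)" using c1 c2 by (simp add: vector_smult_assoc)
  then show ?thesis by blast
qed

lemma part2:
  assumes t1: "1 \<le> t" and tD: "t \<le> D"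
    and thin: "\<forall>W. irred_T_module A E D x W \<and> dual_endpoint E W \<le> t \<longrightarrow> dual_thin E D W"
    and des: "\<forall>k\<le>D. relative_design E t x (dual_idem A x k *v \<chi>')"
    and W: "irred_T_module A E D x W" and r1: "1 \<le> dual_endpoint E W" and rt: "dual_endpoint E W \<le> t"
  shows "\<forall>w\<in>W. herm \<chi>' w = 0"
proof -
  define r where "r = dual_endpoint E W"
  have WM: "T_module A E D x W" using irred_mod[OF W] .
  have Wc: "csubspace W" using T_module_csub[OF WM] .
  have Wnz: "W \<noteq> {0}" using irred_nz[OF W] .
  have rD: "r \<le> D" using endpoint_props(1)[OF Wc Wnz] r_def by simp
  have th: "dual_thin E D W" using thin W rt by blast
  obtain w0 where w0: "w0 \<in> W" "E r *v w0 \<noteq> 0" using endpoint_props(2)[OF Wc Wnz] r_def by blast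
  have below: "E j *v w = 0" if "j < r" "w \<in> W" for j w using endpoint_props(3)[OF Wc Wnz] that r_def by blast
  define v0 where "v0 = E r *v w0"
  have v0W: "v0 \<in> W" unfolding v0_def using T_module_mulv[OF WM E_T[OF rD] w0(1)] .
  have Ev0: "E r *v v0 = v0" unfolding v0_def using E_idem_v[OF rD] .
  have v0nz: "v0 \<noteq> 0" using w0(2) v0_def by simp
  have Elv0: "E l *v v0 = 0" if "l \<le> D" "l \<noteq> r" for l
    unfolding v0_def using EE[OF that(1) rD] that(2) by (simp add: matrix_vector_mul_assoc)
  define U where "U = Uspan x v0"
  have Uc: "csubspace U" unfolding U_def by (rule Uspan_csub)
  have v0U: "v0 \<in> U" unfolding U_def by (rule Uspan_self)
  have UA1: "dual_adj E x 1 *v u \<in> U" if "u \<in> U" for u using Uspan_A1 that U_def by simp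
  have hk: "\<forall>k\<le>D. herm \<chi>' (dual_idem A x k *v v0) = 0"
  proof (intro allI impI)
    fix k assume k: "k \<le> D"
    have "r \<in> {1..t}" using r1 rt r_def by simp
    then have "lin_dep2 (E r *v (dual_idem A x k *v \<chi>')) (E r *v axis x 1)"
      using des k unfolding relative_design_def by blast
    then obtain a b where ab: "a \<noteq> 0 \<or> b \<noteq> 0" "a *s (E r *v (dual_idem A x k *v \<chi>')) + b *s (E r *v axis x 1) = 0"
      unfolding lin_dep2_def by blast
    have h1: "herm (E r *v (dual_idem A x k *v \<chi>')) v0 = herm \<chi>' (dual_idem A x k *v v0)"
    proof -
      have "herm (E r *v (dual_idem A x k *v \<chi>')) v0 = herm (dual_idem A x k *v \<chi>') v0"
        using herm_E[OF rD] Ev0 by simp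
      also have "\<dots> = herm \<chi>' (dual_idem A x k *v v0)" by (simp add: herm_mult hadj_dual_idem[OF k])
      finally show ?thesis .
    qed
    have h2: "herm (E r *v axis x 1) v0 = 0"
    proof -
      have "herm (E r *v axis x 1) v0 = herm (axis x 1) v0" using herm_E[OF rD] Ev0 by simp
      also have "\<dots> = 0" using herm_xhat_perp[OF WM r1 v0W] .
      finally show ?thesis .
    qed
    have "herm (a *s (E r *v (dual_idem A x k *v \<chi>')) + b *s (E r *v axis x 1)) v0 = a * herm \<chi>' (dual_idem A x k *v v0)"
      by (simp add: herm_add_left herm_scale_left h1 h2)
    then have e: "a * herm \<chi>' (dual_idem A x k *v v0) = 0" using ab(2) by simp
    show "herm \<chi>' (dual_idem A x k *v v0) = 0"
    proof (rule ccontr)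
      assume "herm \<chi>' (dual_idem A x k *v v0) \<noteq> 0"
      then have "a = 0" using e by simp
      then have "b \<noteq> 0" "b *s (E r *v axis x 1) = 0" using ab by auto
      then have "E r *v axis x 1 = 0" by (simp add: vec_eq_iff)
      then show False using E_col_nz[OF rD] by simp
    qed
  qed
  have C: "\<forall>u\<in>W. (\<forall>l. j < l \<and> l \<le> D \<longrightarrow> E l *v u = 0) \<longrightarrow> u \<in> U" for j
  proof (induction j)
    case 0
    show ?case
    proof (intro ballI impI)
      fix u assume u: "u \<in> W" and hu: "\<forall>l. 0 < l \<and> l \<le> D \<longrightarrow> E l *v u = 0"
      have "E 0 *v u = 0" using below[OF _ u] r1 r_def by simp
      then have "\<forall>l\<in>{..D}. E l *v u = 0" using hu by (metis atMost_iff gr0I)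
      then have "(\<Sum>l\<le>D. E l *v u) = 0" by (rule sum.neutral)
      moreover have "u = (\<Sum>l\<le>D. E l *v u)" by (simp add: sum_mulv[symmetric] sumE)
      ultimately have "u = 0" by simp
      then show "u \<in> U" using csub_zero[OF Uc] by simp
    qed
  next
    case (Suc j)
    show ?case
    proof (intro ballI impI)
      fix u assume u: "u \<in> W" and hu: "\<forall>l. Suc j < l \<and> l \<le> D \<longrightarrow> E l *v u = 0"
      show "u \<in> U"
      proof (cases "Suc j \<le> D \<and> E (Suc j) *v u \<noteq> 0")
        case False
        then have "\<forall>l. j < l \<and> l \<le> D \<longrightarrow> E l *v u = 0" using hu by (metis Suc_lessI)
        then show ?thesis using Suc.IH u by blast
      next
        case True
        then have sjD: "Suc j \<le> D" and nzu: "E (Suc j) *v u \<noteq> 0" by auto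
        have "\<exists>w\<in>W. w \<in> U \<and> (\<forall>l. Suc j < l \<and> l \<le> D \<longrightarrow> E l *v w = 0) \<and> E (Suc j) *v w \<noteq> 0"
        proof (cases "Suc j < r")
          case True
          then show ?thesis using below[OF True u] nzu by simp
        next
          case False
          show ?thesis
          proof (cases "Suc j = r")
            case True
            show ?thesis
              using v0W v0U Elv0 True Ev0 v0nz by (intro bexI[of _ v0] conjI) auto
          next
            case False
            with \<open>\<not> Suc j < r\<close> have jr: "r \<le> j" by simp
            define Y where "Y = {y \<in> W. \<forall>l. j < l \<and> l \<le> D \<longrightarrow> E l *v y = 0}"
            have YU: "Y \<subseteq> U" using Suc.IH Y_def by blast
            have Yc: "csubspace Y"
              unfolding csubspace_def Y_def using Wc
              by (auto simp: csub_zero csub_add csub_scale matrix_vector_right_distrib mulv_scale)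
            have v0Y: "v0 \<in> Y" unfolding Y_def using v0W Elv0 jr by auto
            have uY: "u \<notin> Y" unfolding Y_def using nzu sjD by auto
            have YW: "Y \<subseteq> W" unfolding Y_def by blast
            have notmod: "\<not> T_module A E D x Y"
            proof
              assume "T_module A E D x Y"
              then have "Y = {0} \<or> Y = W" using irred_sub[OF W _ YW] by blast
              then show False using v0Y v0nz uY u by blast
            qed
            have YA: "A i *v y \<in> Y" if i: "i \<le> D" and y: "y \<in> Y" for i y
            proof -
              have "A i *v y \<in> W" using T_module_mulv[OF WM terwilliger.gen_A[OF i] ] y Y_def by blast
              moreover have "E l *v (A i *v y) = 0" if "j < l" "l \<le> D" for l
              proof -
                have "E l *v (A i *v y) = A i *v (E l *v y)"
                  by (simp add: matrix_vector_mul_assoc BM_comm[OF E_BM[OF that(2)] A_BM[OF i]])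
                then show ?thesis using y that Y_def by simp
              qed
              ultimately show ?thesis unfolding Y_def by blast
            qed
            have "\<not> (\<forall>y\<in>Y. dual_adj E x 1 *v y \<in> Y)"
            proof
              assume c1: "\<forall>y\<in>Y. dual_adj E x 1 *v y \<in> Y"
              have "T_module A E D x Y"
              proof (rule gen_closed[OF Yc])
                fix i y assume i: "i \<le> D" and y: "y \<in> Y"
                show "A i *v y \<in> Y" by (rule YA[OF i y])
                show "dual_adj E x i *v y \<in> Y" by (rule poly_closed[OF Yc _ i y]) (use c1 in blast)
              qed
              then show False using notmod by simp
            qed
            then obtain y where y: "y \<in> Y" "dual_adj E x 1 *v y \<notin> Y" by blast
            define w where "w = dual_adj E x 1 *v y"
            have wW: "w \<in> W" unfolding w_def using T_module_mulv[OF WM terwilliger.gen_Astar[OF D1]] y YW by blast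
            have wU: "w \<in> U" unfolding w_def using UA1 YU y by blast
            have yexp: "y = (\<Sum>i\<le>D. E i *v y)" by (simp add: sum_mulv[symmetric] sumE)
            have high: "E l *v w = 0" if "Suc j < l" "l \<le> D" for l
            proof -
              have "E l *v w = (\<Sum>i\<le>D. E l *v (dual_adj E x 1 *v (E i *v y)))"
                unfolding w_def by (subst yexp) (simp add: mulv_sum)
              also have "\<dots> = 0"
              proof (rule sum.neutral, rule ballI)
                fix i assume i: "i \<in> {..D}"
                show "E l *v (dual_adj E x 1 *v (E i *v y)) = 0"
                proof (cases "i \<le> j")
                  case True
                  then show ?thesis using tridiag[where j=i and k=l and u=y] i that by simp
                next
                  case False
                  then have "E i *v y = 0" using y Y_def i by simp
                  then show ?thesis by simp
                qed
              qed
              finally show ?thesis .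
            qed
            have "\<exists>l. j < l \<and> l \<le> D \<and> E l *v w \<noteq> 0" using y(2) wW unfolding Y_def w_def by blast
            then obtain l where l: "j < l" "l \<le> D" "E l *v w \<noteq> 0" by blast
            have "l = Suc j" using high l by (metis Suc_lessI)
            then have "E (Suc j) *v w \<noteq> 0" using l by simp
            then show ?thesis using wW wU high by blast
          qed
        qed
        then obtain w where w: "w \<in> W" "w \<in> U" "\<forall>l. Suc j < l \<and> l \<le> D \<longrightarrow> E l *v w = 0" "E (Suc j) *v w \<noteq> 0"
          by blast
        obtain c where c: "E (Suc j) *v u = c *s (E (Suc j) *v w)" using thin_ratio[OF th sjD u w(1) w(4)] by blast
        define u' where "u' = u - c *s w"
        have u'W: "u' \<in> W" unfolding u'_def using csub_diff[OF Wc u csub_scale[OF Wc w(1)]] .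
        have "\<forall>l. j < l \<and> l \<le> D \<longrightarrow> E l *v u' = 0"
        proof (intro allI impI)
          fix l assume l: "j < l \<and> l \<le> D"
          show "E l *v u' = 0"
          proof (cases "l = Suc j")
            case True
            then show ?thesis unfolding u'_def using c by (simp add: matrix_vector_mult_diff_distrib mulv_scale)
          next
            case False
            then have "Suc j < l" using l by simp
            then show ?thesis unfolding u'_def using hu w(3) l by (simp add: matrix_vector_mult_diff_distrib mulv_scale)
          qed
        qed
        then have "u' \<in> U" using Suc.IH u'W by blast
        moreover have "u = u' + c *s w" unfolding u'_def by simp
        ultimately show "u \<in> U" using csub_add[OF Uc] csub_scale[OF Uc w(2)] by simp
      qed
    qed
  qed
  have "W \<subseteq> U" using C[of D] by auto
  then show ?thesis using Uspan_perp[OF hk] U_def by blast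
qed

end

theorem lemma4p5:
  fixes A E :: "nat \<Rightarrow> complex^'x::finite^'x" and D t :: nat and x :: 'x
    and \<chi>' :: "complex^'x"
  assumes "symmetric_scheme A E D"
    and "cometric E D"
    and "1 \<le> t" and "t \<le> D"
  shows "((\<forall>W. irred_T_module A E D x W \<and> 1 \<le> dual_endpoint E W \<and> dual_endpoint E W \<le> t
              \<longrightarrow> (\<forall>w\<in>W. herm \<chi>' w = 0))
          \<longleftrightarrow> (\<forall>F\<in>terwilliger A E D x. relative_design E t x (F *v \<chi>')))
       \<and> ((\<forall>W. irred_T_module A E D x W \<and> dual_endpoint E W \<le> t \<longrightarrow> dual_thin E D W)
          \<longrightarrow> (\<forall>k\<le>D. relative_design E t x (dual_idem A x k *v \<chi>'))
          \<longrightarrow> (\<forall>W. irred_T_module A E D x W \<and> 1 \<le> dual_endpoint E W \<and> dual_endpoint E W \<le> t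
              \<longrightarrow> (\<forall>w\<in>W. herm \<chi>' w = 0)))"
  proof -
  have D1: "1 \<le> D" using assms by simp
  interpret cscheme A E D
    by unfold_locales (use assms D1 in auto)
  have P1: "(\<forall>W. irred_T_module A E D x W \<and> 1 \<le> dual_endpoint E W \<and> dual_endpoint E W \<le> t
              \<longrightarrow> (\<forall>w\<in>W. herm \<chi>' w = 0))
          \<longleftrightarrow> (\<forall>F\<in>terwilliger A E D x. relative_design E t x (F *v \<chi>'))"
  proof
    assume i: "\<forall>W. irred_T_module A E D x W \<and> 1 \<le> dual_endpoint E W \<and> dual_endpoint E W \<le> t
              \<longrightarrow> (\<forall>w\<in>W. herm \<chi>' w = 0)"
    then have "\<chi>' \<in> Sset x t" unfolding Sset_def by blast
    then show "\<forall>F\<in>terwilliger A E D x. relative_design E t x (F *v \<chi>')"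
      using part_i_ii[OF assms(4)] by blast
  next
    assume ii: "\<forall>F\<in>terwilliger A E D x. relative_design E t x (F *v \<chi>')"
    show "\<forall>W. irred_T_module A E D x W \<and> 1 \<le> dual_endpoint E W \<and> dual_endpoint E W \<le> t
              \<longrightarrow> (\<forall>w\<in>W. herm \<chi>' w = 0)"
      using part_ii_i[OF assms(4) ii] by blast
  qed
  have P2: "(\<forall>W. irred_T_module A E D x W \<and> dual_endpoint E W \<le> t \<longrightarrow> dual_thin E D W)
          \<longrightarrow> (\<forall>k\<le>D. relative_design E t x (dual_idem A x k *v \<chi>'))
          \<longrightarrow> (\<forall>W. irred_T_module A E D x W \<and> 1 \<le> dual_endpoint E W \<and> dual_endpoint E W \<le> t
              \<longrightarrow> (\<forall>w\<in>W. herm \<chi>' w = 0))"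
    using part2[OF assms(3) assms(4)] by blast
  show ?thesis using P1 P2 by blast
qed

end
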